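(* Let $\varepsilon>0$, $\theta_0>0$, $N=2K+1$, $h=L/N$, and assume the mobility satisfies $\mathcal{M}(x)\ge\mathcal{M}_0>0$ for $x\in[-1,1]$. Let $\Phi\in C^6_{\rm per}(\Omega)$ with $\|\Phi\|_{L^\infty}<1$, and set $\phi^0:=\mathcal{P}_h(\mathcal{P}_N\Phi)$. Let $(\phi^m,\mu^m)_{m\ge1}$ be generated by the scheme $$\frac{\phi^{m}-\phi^{m-1}}{\Delta t}=\nabla_h\cdot(\check{\mathcal{M}}^{m-1}\nabla_h\mu^{m}),\qquad \mu^{m}=\ln(1+\phi^{m})-\ln(1-\phi^{m})-\theta_0\phi^{m-1}-\varepsilon^2\Delta_h\phi^{m}.$$ Then $(\Phi,1)_{L^2}=\langle\phi^0,1\rangle$, and, for any $\Delta t>0$, $h>0$ and $m\in\mathbb{N}$, $$E_h(\phi^m)+\Delta t\,[\check{\mathcal{M}}^{m-1}\nabla_h\mu^m,\nabla_h\mu^m]\le E_h(\phi^{m-1}),$$ so that $E_h(\phi^m)\le E_h(\phi^0)\le C_6$ with $C_6>0$ independent of $h$. Consequently $$\|\nabla_h\phi^m\|_2\le\sqrt{2C_6+\theta_0|\Omega|}\,\varepsilon^{-1}=:C_7\quad\forall m\in\mathbb{N}.$$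
   Context: $\Omega=(0,L)^3$, periodic; $p_i=(i-\tfrac12)h$. $\mathcal{C}_{\rm per}$: real $N$-periodic grid functions on cell centers; $\langle\nu,\xi\rangle=h^3\sum_{i,j,k=1}^N\nu_{i,j,k}\xi_{i,j,k}$; $\|\nu\|_2^2=\langle\nu,\nu\rangle$. $\mathcal{P}_N$ is the Fourier projection of $C_{\rm per}(\Omega)$ onto $\Omega$-periodic trigonometric polynomials of degree at most $K$ in each variable; $\mathcal{P}_h$ is evaluation at cell centers $(p_i,p_j,p_k)$. Face differences $D_x\nu_{i+1/2,j,k}=(\nu_{i+1,j,k}-\nu_{i,j,k})/h$ (similarly $D_y,D_z$), and for face vector fields $[\vec f,\vec g]=h^3\sum_{i,j,k=1}^N(f^x_{i+1/2,j,k}g^x_{i+1/2,j,k}+f^y_{i,j+1/2,k}g^y_{i,j+1/2,k}+f^z_{i,j,k+1/2}g^z_{i,j,k+1/2})$; $\nabla_h\nu=(D_x\nu,D_y\nu,D_z\nu)$ and $\|\nabla_h\nu\|_2^2=[\nabla_h\nu,\nabla_h\nu]$. $\Delta_h$ is the standard 7-point discrete Laplacian. Face mobility $\check{\mathcal{M}}^{n}_{i+1/2,j,k}=\mathcal{M}(\tfrac12(\phi^n_{i+1,j,k}+\phi^n_{i,j,k}))$ etc., and $\nabla_h\cdot(\mathcal{D}\nabla_h\nu)=d_x(\mathcal{D}D_x\nu)+d_y(\mathcal{D}D_y\nu)+d_z(\mathcal{D}D_z\nu)$ with $d_x f_{i,j,k}=(f_{i+1/2,j,k}-f_{i-1/2,j,k})/h$.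 Discrete energy: $E_h(\phi)=\langle1+\phi,\ln(1+\phi)\rangle+\langle1-\phi,\ln(1-\phi)\rangle+\frac{\varepsilon^2}{2}\|\nabla_h\phi\|_2^2-\frac{\theta_0}{2}\|\phi\|_2^2$. *)

theory Defs
  imports "HOL-Analysis.Analysis"
begin

type_synonym pt3 = "real \<times> real \<times> real"
type_synonym grid = "int \<Rightarrow> int \<Rightarrow> int \<Rightarrow> real"

fun Ck :: "nat \<Rightarrow> ('a::euclidean_space \<Rightarrow> real) \<Rightarrow> bool" where
  "Ck 0 f = continuous_on UNIV f"
| "Ck (Suc k) f = (f differentiable_on UNIV \<and>
       (\<forall>b\<in>Basis. Ck k (\<lambda>x. frechet_derivative f (at x) b)))"

definition periodic3 :: "real \<Rightarrow> (pt3 \<Rightarrow> real) \<Rightarrow> bool" where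
  "periodic3 L f \<longleftrightarrow> (\<forall>x y z. f (x + L, y, z) = f (x, y, z) \<and>
      f (x, y + L, z) = f (x, y, z) \<and> f (x, y, z + L) = f (x, y, z))"

definition C6_per :: "real \<Rightarrow> (pt3 \<Rightarrow> real) \<Rightarrow> bool" where
  "C6_per L f \<longleftrightarrow> periodic3 L f \<and> Ck 6 f"

definition Omega :: "real \<Rightarrow> pt3 set" where
  "Omega L = cbox (0, 0, 0) (L, L, L)"

definition fourier_coeff :: "real \<Rightarrow> (pt3 \<Rightarrow> real) \<Rightarrow> int \<times> int \<times> int \<Rightarrow> complex" where
  "fourier_coeff L f k = (case k of (k1, k2, k3) \<Rightarrow>
      complex_of_real (1 / L ^ 3) *
      integral (Omega L) (\<lambda>(x, y, z). complex_of_real (f (x, y, z)) *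
         cis (- 2 * pi * (of_int k1 * x + of_int k2 * y + of_int k3 * z) / L)))"

text \<open>Fourier projection P_N onto trigonometric polynomials of degree at most K
  in each variable (the sum is real for real f; Re just fixes the type).\<close>
definition fourier_proj :: "real \<Rightarrow> nat \<Rightarrow> (pt3 \<Rightarrow> real) \<Rightarrow> pt3 \<Rightarrow> real" where
  "fourier_proj L K f = (\<lambda>(x, y, z). Re (\<Sum>k\<in>{-int K..int K} \<times> {-int K..int K} \<times> {-int K..int K}.
      fourier_coeff L f k *
      (case k of (k1, k2, k3) \<Rightarrow> cis (2 * pi * (of_int k1 * x + of_int k2 * y + of_int k3 * z) / L))))"

definition eval_grid :: "real \<Rightarrow> (pt3 \<Rightarrow> real) \<Rightarrow> grid" where
  "eval_grid h f = (\<lambda>i j k. f ((of_int i - 1/2) * h, (of_int j - 1/2) * h, (of_int k - 1/2) * h))"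

definition grid_periodic :: "nat \<Rightarrow> grid \<Rightarrow> bool" where
  "grid_periodic N f \<longleftrightarrow> (\<forall>i j k. f (i + int N) j k = f i j k \<and>
      f i (j + int N) k = f i j k \<and> f i j (k + int N) = f i j k)"

definition gsum :: "nat \<Rightarrow> (int \<Rightarrow> int \<Rightarrow> int \<Rightarrow> real) \<Rightarrow> real" where
  "gsum N F = (\<Sum>i\<in>{1..int N}. \<Sum>j\<in>{1..int N}. \<Sum>k\<in>{1..int N}. F i j k)"

definition ip :: "real \<Rightarrow> nat \<Rightarrow> grid \<Rightarrow> grid \<Rightarrow> real" where
  "ip h N f g = h ^ 3 * gsum N (\<lambda>i j k. f i j k * g i j k)"

text \<open>Face differences; the value indexed by i is the value at face i+1/2.\<close>
definition Dx :: "real \<Rightarrow> grid \<Rightarrow> grid" where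
  "Dx h f = (\<lambda>i j k. (f (i + 1) j k - f i j k) / h)"
definition Dy :: "real \<Rightarrow> grid \<Rightarrow> grid" where
  "Dy h f = (\<lambda>i j k. (f i (j + 1) k - f i j k) / h)"
definition Dz :: "real \<Rightarrow> grid \<Rightarrow> grid" where
  "Dz h f = (\<lambda>i j k. (f i j (k + 1) - f i j k) / h)"

definition grad_norm_sq :: "real \<Rightarrow> nat \<Rightarrow> grid \<Rightarrow> real" where
  "grad_norm_sq h N f = h ^ 3 * gsum N (\<lambda>i j k.
      (Dx h f i j k)\<^sup>2 + (Dy h f i j k)\<^sup>2 + (Dz h f i j k)\<^sup>2)"

definition lap :: "real \<Rightarrow> grid \<Rightarrow> grid" where
  "lap h f = (\<lambda>i j k.
      (f (i + 1) j k - 2 * f i j k + f (i - 1) j k) / h\<^sup>2 +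
      (f i (j + 1) k - 2 * f i j k + f i (j - 1) k) / h\<^sup>2 +
      (f i j (k + 1) - 2 * f i j k + f i j (k - 1)) / h\<^sup>2)"

text \<open>face mobilities M((phi_{i+1}+phi_i)/2), indexed by the lower cell\<close>
definition Mx :: "(real \<Rightarrow> real) \<Rightarrow> grid \<Rightarrow> grid" where
  "Mx M phi = (\<lambda>i j k. M ((phi (i + 1) j k + phi i j k) / 2))"
definition My :: "(real \<Rightarrow> real) \<Rightarrow> grid \<Rightarrow> grid" where
  "My M phi = (\<lambda>i j k. M ((phi i (j + 1) k + phi i j k) / 2))"
definition Mz :: "(real \<Rightarrow> real) \<Rightarrow> grid \<Rightarrow> grid" where
  "Mz M phi = (\<lambda>i j k. M ((phi i j (k + 1) + phi i j k) / 2))"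

definition div_mob :: "real \<Rightarrow> (real \<Rightarrow> real) \<Rightarrow> grid \<Rightarrow> grid \<Rightarrow> grid" where
  "div_mob h M phi mu = (\<lambda>i j k.
      (Mx M phi i j k * Dx h mu i j k - Mx M phi (i - 1) j k * Dx h mu (i - 1) j k) / h +
      (My M phi i j k * Dy h mu i j k - My M phi i (j - 1) k * Dy h mu i (j - 1) k) / h +
      (Mz M phi i j k * Dz h mu i j k - Mz M phi i j (k - 1) * Dz h mu i j (k - 1)) / h)"

definition mob_grad_sq :: "real \<Rightarrow> nat \<Rightarrow> (real \<Rightarrow> real) \<Rightarrow> grid \<Rightarrow> grid \<Rightarrow> real" where
  "mob_grad_sq h N M phi mu = h ^ 3 * gsum N (\<lambda>i j k.
      Mx M phi i j k * (Dx h mu i j k)\<^sup>2 + My M phi i j k * (Dy h mu i j k)\<^sup>2 +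
      Mz M phi i j k * (Dz h mu i j k)\<^sup>2)"

definition energy :: "real \<Rightarrow> real \<Rightarrow> real \<Rightarrow> nat \<Rightarrow> grid \<Rightarrow> real" where
  "energy eps theta0 h N phi =
      ip h N (\<lambda>i j k. 1 + phi i j k) (\<lambda>i j k. ln (1 + phi i j k)) +
      ip h N (\<lambda>i j k. 1 - phi i j k) (\<lambda>i j k. ln (1 - phi i j k)) +
      eps\<^sup>2 / 2 * grad_norm_sq h N phi - theta0 / 2 * ip h N phi phi"

end

theory Submission
  imports Defs
begin


lemma ibp1:
  fixes g g' :: "real \<Rightarrow> real" and c w L :: real
  assumes L: "L > 0" and w: "w \<noteq> 0" and per: "cis (w * L) = 1"
    and der: "\<And>t. (g has_real_derivative g' t) (at t)"
    and cont: "continuous_on UNIV g'" and gp: "g L = g 0"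
  shows "integral {0..L} (\<lambda>t. complex_of_real (g t) * cis (c - w * t)) =
         integral {0..L} (\<lambda>t. complex_of_real (g' t) * cis (c - w * t)) / (\<i> * complex_of_real w)"
proof -
  define f where "f t = complex_of_real (g t) * cis (c - w * t)" for t
  define A where "A t = complex_of_real (g' t) * cis (c - w * t)" for t
  define B where "B t = complex_of_real (g t) * cis (c - w * t)" for t
  have gc: "continuous_on UNIV g"
    using der by (meson DERIV_isCont continuous_at_imp_continuous_on)
  have d: "(f has_vector_derivative (A t - (\<i> * complex_of_real w) * B t)) (at t within {0..L})" for t
  proof -
    have c1: "((\<lambda>t. cis (c - w * t)) has_vector_derivative (- (\<i> * complex_of_real w) * cis (c - w * t))) (at t)"
    proof -
      have "((\<lambda>t. c - w * t) has_derivative (\<lambda>s. - (w * s))) (at t)"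
        by (auto intro!: derivative_eq_intros)
      from has_derivative_cis[OF this] show ?thesis
        unfolding has_vector_derivative_def by (simp add: fun_eq_iff algebra_simps scaleR_conv_of_real)
    qed
    have g1: "((\<lambda>t. complex_of_real (g t)) has_vector_derivative complex_of_real (g' t)) (at t)"
      by (rule has_vector_derivative_of_real[OF der])
    have "(f has_vector_derivative (A t - (\<i> * complex_of_real w) * B t)) (at t)"
      using has_vector_derivative_mult[OF g1 c1] unfolding f_def A_def B_def
      by (simp add: algebra_simps)
    then show ?thesis by (rule has_vector_derivative_at_within)
  qed
  have "((\<lambda>t. A t - (\<i> * complex_of_real w) * B t) has_integral (f L - f 0)) {0..L}"
    using fundamental_theorem_of_calculus[of 0 L f] d L by auto
  moreover have "f L - f 0 = 0"
  proof -
    have "cis (c - w * L) = cis c * cis (- (w * L))"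
      by (simp add: cis_mult)
    also have "cis (- (w * L)) = 1" using per by (metis cis_inverse inverse_1)
    finally have "cis (c - w * L) = cis c" by simp
    then show ?thesis using per gp by (simp add: f_def)
  qed
  ultimately have h: "integral {0..L} (\<lambda>t. A t - (\<i> * complex_of_real w) * B t) = 0"
    by (simp add: integral_unique)
  have iA: "A integrable_on {0..L}" unfolding A_def
    by (intro integrable_continuous_interval continuous_intros continuous_on_subset[OF cont]) auto
  have iB: "B integrable_on {0..L}" unfolding B_def
    by (intro integrable_continuous_interval continuous_intros continuous_on_subset[OF gc]) auto
  have "integral {0..L} A = (\<i> * complex_of_real w) * integral {0..L} B"
    using h integral_diff[OF iA integrable_on_mult_right[OF iB]] by simp
  then show ?thesis using w unfolding A_def B_def by (simp add: field_simps)
qed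



definition pd :: "pt3 \<Rightarrow> (pt3 \<Rightarrow> real) \<Rightarrow> pt3 \<Rightarrow> real" where
  "pd b F = (\<lambda>x. frechet_derivative F (at x) b)"

lemma Ck_cont: "Ck k F \<Longrightarrow> continuous_on UNIV F"
  by (cases k) (auto intro: differentiable_imp_continuous_on)

lemma Ck_pd: "Ck (Suc k) F \<Longrightarrow> b \<in> Basis \<Longrightarrow> Ck k (pd b F)"
  by (simp add: pd_def zero_prod_def)

lemma Ck_pd_iter: "Ck (j + r) F \<Longrightarrow> b \<in> Basis \<Longrightarrow> Ck r ((pd b ^^ j) F)"
proof (induction j arbitrary: F)
  case 0 then show ?case by simp
next
  case (Suc j)
  have "Ck (j + r) (pd b F)" using Ck_pd[of "j + r" F b] Suc.prems by simp
  then have "Ck r ((pd b ^^ j) (pd b F))" using Suc by blast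
  then show ?case by (simp add: funpow_Suc_right del: funpow.simps)
qed

lemma fd_shift:
  fixes F :: "pt3 \<Rightarrow> real"
  assumes d: "F differentiable_on UNIV" and s: "\<And>p. F (p + v) = F p"
  shows "frechet_derivative F (at (p + v)) = frechet_derivative F (at p)"
proof -
  have "(F has_derivative frechet_derivative F (at (p + v))) (at (p + v))"
    using d unfolding differentiable_on_def frechet_derivative_works by blast
  then have "((\<lambda>q. F (q + v)) has_derivative frechet_derivative F (at (p + v))) (at p)"
  proof -
    have "((\<lambda>q. q + v) has_derivative (\<lambda>q. q)) (at p)"
      by (auto intro!: derivative_eq_intros)
    from has_derivative_compose[OF this \<open>(F has_derivative _) (at (p + v))\<close>]
    show ?thesis by (simp add: o_def)
  qed
  then have "(F has_derivative frechet_derivative F (at (p + v))) (at p)"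
    using s by simp
  then show ?thesis by (metis frechet_derivative_at)
qed

lemma periodic_pd:
  assumes "periodic3 L F" "F differentiable_on UNIV"
  shows "periodic3 L (pd b F)"
proof -
  have 1: "F (p + (L,0,0)) = F p" "F (p + (0,L,0)) = F p" "F (p + (0,0,L)) = F p" for p
    using assms(1) unfolding periodic3_def by (cases p; auto)+
  show ?thesis unfolding periodic3_def pd_def
  proof (intro allI conjI)
    fix x y z
    show "frechet_derivative F (at (x + L, y, z)) b = frechet_derivative F (at (x, y, z)) b"
      using fd_shift[OF assms(2) 1(1), of "(x,y,z)"] by simp
    show "frechet_derivative F (at (x, y + L, z)) b = frechet_derivative F (at (x, y, z)) b"
      using fd_shift[OF assms(2) 1(2), of "(x,y,z)"] by simp
    show "frechet_derivative F (at (x, y, z + L)) b = frechet_derivative F (at (x, y, z)) b"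
      using fd_shift[OF assms(2) 1(3), of "(x,y,z)"] by simp
  qed
qed

lemma periodic_pd_iter:
  assumes "periodic3 L F" "Ck j F" "b \<in> Basis" "i \<le> j"
  shows "periodic3 L ((pd b ^^ i) F)"
  using assms
proof (induction i arbitrary: F j)
  case 0 then show ?case by simp
next
  case (Suc i)
  then obtain j' where j: "j = Suc j'" by (cases j) auto
  have "F differentiable_on UNIV" using Suc.prems j by simp
  then have "periodic3 L (pd b F)" using periodic_pd Suc.prems by blast
  moreover have "Ck j' (pd b F)" using Suc.prems j by (simp add: pd_def zero_prod_def)
  ultimately have "periodic3 L ((pd b ^^ i) (pd b F))" using Suc j by auto
  then show ?case by (simp add: funpow_Suc_right del: funpow.simps)
qed

lemma pder1:
  fixes F :: "pt3 \<Rightarrow> real"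
  assumes d: "F differentiable_on UNIV" and v: "\<And>t. \<gamma> t = p + t *\<^sub>R v"
  shows "((\<lambda>t. F (\<gamma> t)) has_real_derivative frechet_derivative F (at (\<gamma> t)) v) (at t)"
proof -
  have D: "(F has_derivative frechet_derivative F (at (\<gamma> t))) (at (\<gamma> t))"
    using d unfolding differentiable_on_def frechet_derivative_works by blast
  have L: "linear (frechet_derivative F (at (\<gamma> t)))" using D has_derivative_linear by blast
  have g: "(\<gamma> has_derivative (\<lambda>s. s *\<^sub>R v)) (at t)"
    unfolding v[abs_def] by (auto intro!: derivative_eq_intros)
  have "((\<lambda>t. F (\<gamma> t)) has_derivative (\<lambda>s. frechet_derivative F (at (\<gamma> t)) (s *\<^sub>R v))) (at t)"
    using has_derivative_compose[OF g D] by (simp add: o_def)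
  then show ?thesis unfolding has_field_derivative_def
    using linear_cmul[OF L] by (simp add: mult.commute[of _ "frechet_derivative F (at (\<gamma> t)) v"])
qed

lemma pderx: "F differentiable_on UNIV \<Longrightarrow>
  ((\<lambda>t. F (t, y, z)) has_real_derivative pd (1,0,0) F (t, y, z)) (at t)"
  using pder1[of F "\<lambda>t. (t,y,z)" "(0,y,z)" "(1,0,0)" t] by (simp add: pd_def zero_prod_def)
lemma pdery: "F differentiable_on UNIV \<Longrightarrow>
  ((\<lambda>t. F (x, t, z)) has_real_derivative pd (0,1,0) F (x, t, z)) (at t)"
  using pder1[of F "\<lambda>t. (x,t,z)" "(x,0,z)" "(0,1,0)" t] by (simp add: pd_def zero_prod_def)
lemma pderz: "F differentiable_on UNIV \<Longrightarrow>
  ((\<lambda>t. F (x, y, t)) has_real_derivative pd (0,0,1) F (x, y, t)) (at t)"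
  using pder1[of F "\<lambda>t. (x,y,t)" "(x,y,0)" "(0,0,1)" t] by (simp add: pd_def zero_prod_def)

lemma basis3: "((1,0,0)::pt3) \<in> Basis" "((0,1,0)::pt3) \<in> Basis" "((0,0,1)::pt3) \<in> Basis"
  by (auto simp: Basis_prod_def zero_prod_def)



lemma Omega_eq: "Omega L = cbox (0, (0, 0)) (L, (L, L))"
  by (simp add: Omega_def)

lemma contH:
  fixes G :: "pt3 \<Rightarrow> real"
  assumes "continuous_on UNIV G" and "L > 0"
  shows "continuous_on UNIV (\<lambda>(x, y, z). complex_of_real (G (x, y, z)) *
           cis (- 2 * pi * (of_int k1 * x + of_int k2 * y + of_int k3 * z) / L))"
proof -
  have e: "(\<lambda>(x, y, z). complex_of_real (G (x, y, z)) *
           cis (- 2 * pi * (of_int k1 * x + of_int k2 * y + of_int k3 * z) / L)) =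
        (\<lambda>p. complex_of_real (G p) *
           cis (- 2 * pi * (of_int k1 * fst p + of_int k2 * fst (snd p) + of_int k3 * snd (snd p)) / L))"
    by (auto simp: fun_eq_iff)
  show ?thesis unfolding e
    using assms(2) by (intro continuous_intros continuous_on_compose2[OF assms(1)]) auto
qed

lemma fub1:
  fixes H :: "pt3 \<Rightarrow> complex"
  assumes c: "continuous_on UNIV H"
  shows "integral (Omega L) H = integral {0..L} (\<lambda>x. integral {0..L} (\<lambda>y. integral {0..L} (\<lambda>z. H (x, y, z))))"
proof -
  have "integral (Omega L) H = integral (cbox 0 L) (\<lambda>x. integral (cbox (0, 0) (L, L)) (\<lambda>yz. H (x, yz)))"
    unfolding Omega_eq by (rule integral_prod_continuous) (rule continuous_on_subset[OF c], auto)
  also have "\<dots> = integral (cbox 0 L) (\<lambda>x. integral (cbox 0 L) (\<lambda>y. integral (cbox 0 L) (\<lambda>z. H (x, y, z))))"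
  proof (rule integral_cong)
    fix x :: real
    have "continuous_on UNIV (\<lambda>yz::real\<times>real. H (x, yz))"
      by (intro continuous_on_compose2[OF c] continuous_intros) auto
    then show "integral (cbox (0, 0) (L, L)) (\<lambda>yz. H (x, yz)) =
      integral (cbox 0 L) (\<lambda>y. integral (cbox 0 L) (\<lambda>z. H (x, y, z)))"
      by (subst integral_prod_continuous) (rule continuous_on_subset, assumption, simp_all)
  qed
  finally show ?thesis by (simp add: box_real)
qed

lemma fub2:
  fixes H :: "pt3 \<Rightarrow> complex"
  assumes c: "continuous_on UNIV H"
  shows "integral (Omega L) H = integral (cbox (0, 0) (L, L)) (\<lambda>yz. integral {0..L} (\<lambda>x. H (x, yz)))"
proof -
  have "integral (Omega L) H = integral (cbox 0 L) (\<lambda>x. integral (cbox (0, 0) (L, L)) (\<lambda>yz. H (x, yz)))"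
    unfolding Omega_eq by (rule integral_prod_continuous) (rule continuous_on_subset[OF c], auto)
  also have "\<dots> = integral (cbox (0, 0) (L, L)) (\<lambda>yz. integral (cbox 0 L) (\<lambda>x. H (x, yz)))"
  proof (rule integral_swap_continuous)
    have "(\<lambda>(x, yz). H (x, yz)) = H" by auto
    then show "continuous_on (cbox (0, 0, 0) (L, L, L)) (\<lambda>(x, yz). H (x, yz))"
      using continuous_on_subset[OF c] by simp
  qed
  finally show ?thesis by (simp add: box_real)
qed

lemma fub3:
  fixes H :: "pt3 \<Rightarrow> complex"
  assumes c: "continuous_on UNIV H"
  shows "integral (Omega L) H = integral {0..L} (\<lambda>x. integral {0..L} (\<lambda>z. integral {0..L} (\<lambda>y. H (x, y, z))))"
proof -
  have "integral (Omega L) H = integral {0..L} (\<lambda>x. integral {0..L} (\<lambda>y. integral {0..L} (\<lambda>z. H (x, y, z))))"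
    by (rule fub1[OF c])
  also have "\<dots> = integral {0..L} (\<lambda>x. integral {0..L} (\<lambda>z. integral {0..L} (\<lambda>y. H (x, y, z))))"
  proof (rule integral_cong)
    fix x :: real
    have "continuous_on UNIV (\<lambda>(y, z). H (x, y, z))"
    proof -
      have "(\<lambda>(y, z). H (x, y, z)) = (\<lambda>yz. H (x, yz))" by auto
      moreover have "continuous_on UNIV (\<lambda>yz::real\<times>real. H (x, yz))"
        by (intro continuous_on_compose2[OF c] continuous_intros) auto
      ultimately show ?thesis by simp
    qed
    then show "integral {0..L} (\<lambda>y. integral {0..L} (\<lambda>z. H (x, y, z))) =
      integral {0..L} (\<lambda>z. integral {0..L} (\<lambda>y. H (x, y, z)))"
      using integral_swap_continuous[of 0 0 L L "\<lambda>y z. H (x, y, z)"]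
        continuous_on_subset[OF \<open>continuous_on UNIV (\<lambda>(y, z). H (x, y, z))\<close>, of "cbox (0,0) (L,L)"]
      by (simp add: box_real)
  qed
  finally show ?thesis .
qed

lemma ibp_line:
  fixes g g' :: "real \<Rightarrow> real" and q L :: real and k :: int
  assumes L: "L > 0" and k: "k \<noteq> 0"
    and der: "\<And>t. (g has_real_derivative g' t) (at t)"
    and cont: "continuous_on UNIV g'" and gp: "g L = g 0"
  shows "integral {0..L} (\<lambda>t. complex_of_real (g t) * cis (- 2 * pi * (of_int k * t + q) / L)) =
         integral {0..L} (\<lambda>t. complex_of_real (g' t) * cis (- 2 * pi * (of_int k * t + q) / L))
           / (\<i> * complex_of_real (2 * pi * of_int k / L))"
proof -
  have e: "- 2 * pi * (of_int k * t + q) / L = (- 2 * pi * q / L) - (2 * pi * of_int k / L) * t" for t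
    using L by (simp add: field_simps)
  have w: "2 * pi * of_int k / L \<noteq> 0" using L k by simp
  have p: "cis (2 * pi * of_int k / L * L) = 1"
    using L by simp
  show ?thesis unfolding e
    by (rule ibp1[OF L w p der cont gp])
qed

definition FI :: "real \<Rightarrow> (pt3 \<Rightarrow> real) \<Rightarrow> int \<Rightarrow> int \<Rightarrow> int \<Rightarrow> complex" where
  "FI L F k1 k2 k3 = integral (Omega L) (\<lambda>(x, y, z). complex_of_real (F (x, y, z)) *
           cis (- 2 * pi * (of_int k1 * x + of_int k2 * y + of_int k3 * z) / L))"

lemma Ck1D: "Ck (Suc 0) F \<Longrightarrow> b \<in> Basis \<Longrightarrow> continuous_on UNIV (pd b F)"
  by (simp add: pd_def)

lemma ibpx:
  assumes L: "L > 0" and C: "Ck (Suc 0) F" and per: "periodic3 L F" and k: "k1 \<noteq> 0"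
  shows "FI L F k1 k2 k3 = FI L (pd (1,0,0) F) k1 k2 k3 / (\<i> * complex_of_real (2 * pi * of_int k1 / L))"
proof -
  have d: "F differentiable_on UNIV" using C by simp
  have c0: "continuous_on UNIV F" using C Ck_cont by blast
  have c1: "continuous_on UNIV (pd (1,0,0) F)" using Ck1D[OF C basis3(1)] .
  have "FI L F k1 k2 k3 = integral (cbox (0, 0) (L, L)) (\<lambda>yz. integral {0..L} (\<lambda>x.
     complex_of_real (F (x, yz)) * cis (- 2 * pi * (of_int k1 * x + of_int k2 * fst yz + of_int k3 * snd yz) / L)))"
    unfolding FI_def by (subst fub2[OF contH[OF c0 L]]) (simp add: case_prod_beta')
  also have "\<dots> = integral (cbox (0, 0) (L, L)) (\<lambda>yz. integral {0..L} (\<lambda>x.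
     complex_of_real (pd (1,0,0) F (x, yz)) * cis (- 2 * pi * (of_int k1 * x + of_int k2 * fst yz + of_int k3 * snd yz) / L))
      / (\<i> * complex_of_real (2 * pi * of_int k1 / L)))"
  proof (rule integral_cong)
    fix yz :: "real \<times> real"
    obtain y z where yz: "yz = (y, z)" by (cases yz)
    have der: "((\<lambda>t. F (t, y, z)) has_real_derivative pd (1,0,0) F (t, y, z)) (at t)" for t
      by (rule pderx[OF d])
    have cc: "continuous_on UNIV (\<lambda>t. pd (1,0,0) F (t, y, z))"
      by (intro continuous_on_compose2[OF c1] continuous_intros) auto
    have gp: "F (L, y, z) = F (0, y, z)" using per unfolding periodic3_def by (metis add_0)
    show "integral {0..L} (\<lambda>x. complex_of_real (F (x, yz)) * cis (- 2 * pi * (of_int k1 * x + of_int k2 * fst yz + of_int k3 * snd yz) / L)) =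
      integral {0..L} (\<lambda>x. complex_of_real (pd (1,0,0) F (x, yz)) * cis (- 2 * pi * (of_int k1 * x + of_int k2 * fst yz + of_int k3 * snd yz) / L))
       / (\<i> * complex_of_real (2 * pi * of_int k1 / L))"
      using ibp_line[OF L k der cc gp, of "of_int k2 * y + of_int k3 * z"]
      by (simp add: yz add.assoc)
  qed
  also have "\<dots> = FI L (pd (1,0,0) F) k1 k2 k3 / (\<i> * complex_of_real (2 * pi * of_int k1 / L))"
    unfolding FI_def by (subst fub2[OF contH[OF c1 L]]) (simp add: case_prod_beta')
  finally show ?thesis .
qed



lemma ibpz:
  assumes L: "L > 0" and C: "Ck (Suc 0) F" and per: "periodic3 L F" and k: "k3 \<noteq> 0"
  shows "FI L F k1 k2 k3 = FI L (pd (0,0,1) F) k1 k2 k3 / (\<i> * complex_of_real (2 * pi * of_int k3 / L))"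
proof -
  have d: "F differentiable_on UNIV" using C by simp
  have c0: "continuous_on UNIV F" using C Ck_cont by blast
  have c1: "continuous_on UNIV (pd (0,0,1) F)" using Ck1D[OF C basis3(3)] .
  have "FI L F k1 k2 k3 = integral {0..L} (\<lambda>x. integral {0..L} (\<lambda>y. integral {0..L} (\<lambda>z.
     complex_of_real (F (x, y, z)) * cis (- 2 * pi * (of_int k1 * x + of_int k2 * y + of_int k3 * z) / L))))"
    unfolding FI_def by (subst fub1[OF contH[OF c0 L]]) simp
  also have "\<dots> = integral {0..L} (\<lambda>x. integral {0..L} (\<lambda>y. integral {0..L} (\<lambda>z.
     complex_of_real (pd (0,0,1) F (x, y, z)) * cis (- 2 * pi * (of_int k1 * x + of_int k2 * y + of_int k3 * z) / L))
      / (\<i> * complex_of_real (2 * pi * of_int k3 / L))))"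
  proof (intro integral_cong)
    fix x y
    have der: "((\<lambda>t. F (x, y, t)) has_real_derivative pd (0,0,1) F (x, y, t)) (at t)" for t
      by (rule pderz[OF d])
    have cc: "continuous_on UNIV (\<lambda>t. pd (0,0,1) F (x, y, t))"
      by (intro continuous_on_compose2[OF c1] continuous_intros) auto
    have gp: "F (x, y, L) = F (x, y, 0)" using per unfolding periodic3_def by (metis add_0)
    show "integral {0..L} (\<lambda>z. complex_of_real (F (x, y, z)) * cis (- 2 * pi * (of_int k1 * x + of_int k2 * y + of_int k3 * z) / L)) =
      integral {0..L} (\<lambda>z. complex_of_real (pd (0,0,1) F (x, y, z)) * cis (- 2 * pi * (of_int k1 * x + of_int k2 * y + of_int k3 * z) / L))
       / (\<i> * complex_of_real (2 * pi * of_int k3 / L))"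
      using ibp_line[OF L k der cc gp, of "of_int k1 * x + of_int k2 * y"]
      by (simp add: ac_simps)
  qed
  also have "\<dots> = FI L (pd (0,0,1) F) k1 k2 k3 / (\<i> * complex_of_real (2 * pi * of_int k3 / L))"
    unfolding FI_def by (subst fub1[OF contH[OF c1 L]]) simp
  finally show ?thesis .
qed

lemma ibpy:
  assumes L: "L > 0" and C: "Ck (Suc 0) F" and per: "periodic3 L F" and k: "k2 \<noteq> 0"
  shows "FI L F k1 k2 k3 = FI L (pd (0,1,0) F) k1 k2 k3 / (\<i> * complex_of_real (2 * pi * of_int k2 / L))"
proof -
  have d: "F differentiable_on UNIV" using C by simp
  have c0: "continuous_on UNIV F" using C Ck_cont by blast
  have c1: "continuous_on UNIV (pd (0,1,0) F)" using Ck1D[OF C basis3(2)] .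
  have "FI L F k1 k2 k3 = integral {0..L} (\<lambda>x. integral {0..L} (\<lambda>z. integral {0..L} (\<lambda>y.
     complex_of_real (F (x, y, z)) * cis (- 2 * pi * (of_int k1 * x + of_int k2 * y + of_int k3 * z) / L))))"
    unfolding FI_def by (subst fub3[OF contH[OF c0 L]]) simp
  also have "\<dots> = integral {0..L} (\<lambda>x. integral {0..L} (\<lambda>z. integral {0..L} (\<lambda>y.
     complex_of_real (pd (0,1,0) F (x, y, z)) * cis (- 2 * pi * (of_int k1 * x + of_int k2 * y + of_int k3 * z) / L))
      / (\<i> * complex_of_real (2 * pi * of_int k2 / L))))"
  proof (intro integral_cong)
    fix x z
    have der: "((\<lambda>t. F (x, t, z)) has_real_derivative pd (0,1,0) F (x, t, z)) (at t)" for t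
      by (rule pdery[OF d])
    have cc: "continuous_on UNIV (\<lambda>t. pd (0,1,0) F (x, t, z))"
      by (intro continuous_on_compose2[OF c1] continuous_intros) auto
    have gp: "F (x, L, z) = F (x, 0, z)" using per unfolding periodic3_def by (metis add_0)
    show "integral {0..L} (\<lambda>y. complex_of_real (F (x, y, z)) * cis (- 2 * pi * (of_int k1 * x + of_int k2 * y + of_int k3 * z) / L)) =
      integral {0..L} (\<lambda>y. complex_of_real (pd (0,1,0) F (x, y, z)) * cis (- 2 * pi * (of_int k1 * x + of_int k2 * y + of_int k3 * z) / L))
       / (\<i> * complex_of_real (2 * pi * of_int k2 / L))"
      using ibp_line[OF L k der cc gp, of "of_int k1 * x + of_int k3 * z"]
      by (simp add: ac_simps)
  qed
  also have "\<dots> = FI L (pd (0,1,0) F) k1 k2 k3 / (\<i> * complex_of_real (2 * pi * of_int k2 / L))"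
    unfolding FI_def by (subst fub3[OF contH[OF c1 L]]) simp
  finally show ?thesis .
qed

lemma Ck_mono: "Ck (Suc k) f \<Longrightarrow> Ck k f"
proof (induction k arbitrary: f)
  case 0 then show ?case by (auto intro: differentiable_imp_continuous_on)
next
  case (Suc k) then show ?case by auto
qed

lemma Ck_mono': "Ck (j + k) f \<Longrightarrow> Ck k f"
proof (induction j)
  case (Suc j) then show ?case by (metis Ck_mono add_Suc)
qed simp

lemma ibp_iter:
  assumes step: "\<And>G. Ck (Suc 0) G \<Longrightarrow> periodic3 L G \<Longrightarrow> FI L G k1 k2 k3 = FI L (pd b G) k1 k2 k3 / z"
    and b: "b \<in> Basis"
  shows "Ck j F \<Longrightarrow> periodic3 L F \<Longrightarrow> FI L F k1 k2 k3 = FI L ((pd b ^^ j) F) k1 k2 k3 / z ^ j"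
proof (induction j arbitrary: F)
  case 0 then show ?case by simp
next
  case (Suc j)
  have c1: "Ck (Suc 0) F" using Ck_mono'[of j "Suc 0" F] Suc.prems by simp
  have "Ck j (pd b F)" using Suc.prems b by (simp add: pd_def)
  moreover have "periodic3 L (pd b F)" using periodic_pd Suc.prems by auto
  ultimately have "FI L (pd b F) k1 k2 k3 = FI L ((pd b ^^ j) (pd b F)) k1 k2 k3 / z ^ j"
    using Suc.IH by blast
  then show ?case using step[OF c1 Suc.prems(2)]
    by (simp add: funpow_Suc_right del: funpow.simps)
qed

lemma FI_bound:
  assumes L: "L > 0" and c: "continuous_on UNIV G"
  shows "\<exists>B\<ge>0. \<forall>k1 k2 k3. norm (FI L G k1 k2 k3) \<le> B"
proof -
  have "compact (G ` Omega L)"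
    unfolding Omega_def by (intro compact_continuous_image continuous_on_subset[OF c]) auto
  then obtain M where M0: "\<forall>x\<in>G ` Omega L. norm x \<le> M"
    using compact_imp_bounded bounded_iff by metis
  then have M: "\<And>p. p \<in> Omega L \<Longrightarrow> \<bar>G p\<bar> \<le> M" by auto
  define M' where "M' = max 0 M"
  have M': "\<And>p. p \<in> Omega L \<Longrightarrow> \<bar>G p\<bar> \<le> M'" "M' \<ge> 0" using M unfolding M'_def by force+
  show ?thesis
  proof (intro exI[of _ "M' * Henstock_Kurzweil_Integration.content (Omega L)"] conjI allI)
    show "0 \<le> M' * Henstock_Kurzweil_Integration.content (Omega L)" using M' by simp
    fix k1 k2 k3
    have i: "(\<lambda>(x, y, z). complex_of_real (G (x, y, z)) *
           cis (- 2 * pi * (of_int k1 * x + of_int k2 * y + of_int k3 * z) / L)) integrable_on Omega L"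
      unfolding Omega_def by (rule integrable_continuous, rule continuous_on_subset[OF contH[OF c L]]) auto
    show "norm (FI L G k1 k2 k3) \<le> M' * Henstock_Kurzweil_Integration.content (Omega L)"
      unfolding FI_def
      apply (rule has_integral_bound[OF M'(2) i[unfolded Omega_def, THEN integrable_integral], folded Omega_def])
      using M' by (auto simp: norm_mult)
  qed
qed



lemma decay_dir:
  assumes L: "L > 0" and B: "\<forall>k1 k2 k3. norm (FI L G k1 k2 k3) \<le> B"
    and e: "FI L F k1 k2 k3 = FI L G k1 k2 k3 / (\<i> * complex_of_real (2 * pi * of_int k / L)) ^ 6"
    and k: "k \<noteq> 0"
  shows "norm (FI L F k1 k2 k3) \<le> B * (L / (2 * pi)) ^ 6 / real_of_int \<bar>k\<bar> ^ 6"
proof -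
  have nz: "norm ((\<i> * complex_of_real (2 * pi * of_int k / L)) ^ 6) = (2 * pi * real_of_int \<bar>k\<bar> / L) ^ 6"
  proof -
    have "norm (\<i> * complex_of_real r) = \<bar>r\<bar>" for r by (simp add: norm_mult)
    moreover have "\<bar>2 * pi * of_int k / L\<bar> = 2 * pi * real_of_int \<bar>k\<bar> / L" using L by (simp add: abs_mult)
    ultimately show ?thesis by (simp only: norm_power)
  qed
  have pos: "(2 * pi * real_of_int \<bar>k\<bar> / L) ^ 6 > 0" using L k by simp
  have "norm (FI L F k1 k2 k3) = norm (FI L G k1 k2 k3) / (2 * pi * real_of_int \<bar>k\<bar> / L) ^ 6"
    using e nz by (simp add: norm_divide)
  also have "\<dots> \<le> B / (2 * pi * real_of_int \<bar>k\<bar> / L) ^ 6"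
    using B pos by (simp add: divide_right_mono)
  also have "\<dots> = B * (L / (2 * pi)) ^ 6 / real_of_int \<bar>k\<bar> ^ 6"
    using L k by (simp add: field_simps power_mult_distrib power_divide)
  finally show ?thesis .
qed

lemma decay:
  assumes L: "L > 0" and C: "Ck 6 Phi" and per: "periodic3 L Phi"
  shows "\<exists>C\<ge>0. \<forall>k1 k2 k3. norm (FI L Phi k1 k2 k3) \<le>
            C / real_of_int (max 1 (max \<bar>k1\<bar> (max \<bar>k2\<bar> \<bar>k3\<bar>))) ^ 6"
proof -
  have C': "Ck (6 + 0) Phi" using C by simp
  obtain B0 where B0: "B0 \<ge> 0" "\<forall>k1 k2 k3. norm (FI L Phi k1 k2 k3) \<le> B0"
    using FI_bound[OF L Ck_cont[OF C]] by blast
  obtain B1 where B1: "B1 \<ge> 0" "\<forall>k1 k2 k3. norm (FI L ((pd (1,0,0) ^^ 6) Phi) k1 k2 k3) \<le> B1"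
    using FI_bound[OF L Ck_cont[OF Ck_pd_iter[OF C' basis3(1)]]] by blast
  obtain B2 where B2: "B2 \<ge> 0" "\<forall>k1 k2 k3. norm (FI L ((pd (0,1,0) ^^ 6) Phi) k1 k2 k3) \<le> B2"
    using FI_bound[OF L Ck_cont[OF Ck_pd_iter[OF C' basis3(2)]]] by blast
  obtain B3 where B3: "B3 \<ge> 0" "\<forall>k1 k2 k3. norm (FI L ((pd (0,0,1) ^^ 6) Phi) k1 k2 k3) \<le> B3"
    using FI_bound[OF L Ck_cont[OF Ck_pd_iter[OF C' basis3(3)]]] by blast
  define c where "c = (L / (2 * pi)) ^ 6"
  have c0: "c \<ge> 0" using L by (simp add: c_def)
  define CC where "CC = max B0 (max (B1 * c) (max (B2 * c) (B3 * c)))"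
  have CC0: "CC \<ge> 0" using B0 by (simp add: CC_def)
  have dx: "norm (FI L Phi k1 k2 k3) \<le> B1 * c / real_of_int \<bar>k1\<bar> ^ 6" if "k1 \<noteq> 0" for k1 k2 k3
    unfolding c_def
    by (rule decay_dir[OF L B1(2) _ that], rule ibp_iter[OF ibpx[OF L _ _ that] basis3(1) C per])
  have dy: "norm (FI L Phi k1 k2 k3) \<le> B2 * c / real_of_int \<bar>k2\<bar> ^ 6" if "k2 \<noteq> 0" for k1 k2 k3
    unfolding c_def
    by (rule decay_dir[OF L B2(2) _ that], rule ibp_iter[OF ibpy[OF L _ _ that] basis3(2) C per])
  have dz: "norm (FI L Phi k1 k2 k3) \<le> B3 * c / real_of_int \<bar>k3\<bar> ^ 6" if "k3 \<noteq> 0" for k1 k2 k3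
    unfolding c_def
    by (rule decay_dir[OF L B3(2) _ that], rule ibp_iter[OF ibpz[OF L _ _ that] basis3(3) C per])
  show ?thesis
  proof (intro exI[of _ CC] conjI allI)
    fix k1 k2 k3 :: int
    define m where "m = max 1 (max \<bar>k1\<bar> (max \<bar>k2\<bar> \<bar>k3\<bar>))"
    have m1: "m \<ge> 1" by (simp add: m_def)
    have mp: "real_of_int m ^ 6 > 0" using m1 by simp
    have cases: "m = 1 \<or> m = \<bar>k1\<bar> \<or> m = \<bar>k2\<bar> \<or> m = \<bar>k3\<bar>" unfolding m_def by linarith
    have "norm (FI L Phi k1 k2 k3) \<le> CC / real_of_int m ^ 6"
    proof -
      { assume "m = 1"
        have "norm (FI L Phi k1 k2 k3) \<le> B0" using B0(2) by blast
        moreover have "B0 \<le> CC" by (simp add: CC_def)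
        ultimately have ?thesis using \<open>m = 1\<close> by simp }
      moreover
      { assume h: "m = \<bar>k1\<bar>" "m \<noteq> 1"
        then have "k1 \<noteq> 0" using m1 by auto
        then have "norm (FI L Phi k1 k2 k3) \<le> B1 * c / real_of_int m ^ 6" using dx h by simp
        also have "\<dots> \<le> CC / real_of_int m ^ 6" using mp by (intro divide_right_mono) (auto simp: CC_def)
        finally have ?thesis . }
      moreover
      { assume h: "m = \<bar>k2\<bar>" "m \<noteq> 1"
        then have "k2 \<noteq> 0" using m1 by auto
        then have "norm (FI L Phi k1 k2 k3) \<le> B2 * c / real_of_int m ^ 6" using dy h by simp
        also have "\<dots> \<le> CC / real_of_int m ^ 6" using mp by (intro divide_right_mono) (auto simp: CC_def)
        finally have ?thesis . }
      moreover
      { assume h: "m = \<bar>k3\<bar>" "m \<noteq> 1"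
        then have "k3 \<noteq> 0" using m1 by auto
        then have "norm (FI L Phi k1 k2 k3) \<le> B3 * c / real_of_int m ^ 6" using dz h by simp
        also have "\<dots> \<le> CC / real_of_int m ^ 6" using mp by (intro divide_right_mono) (auto simp: CC_def)
        finally have ?thesis . }
      ultimately show ?thesis using cases by blast
    qed
    then show "norm (FI L Phi k1 k2 k3) \<le> CC / real_of_int (max 1 (max \<bar>k1\<bar> (max \<bar>k2\<bar> \<bar>k3\<bar>))) ^ 6"
      by (simp add: m_def)
  qed (rule CC0)
qed



lemma cis_diff_le: "norm (cis a - cis b) \<le> \<bar>a - b\<bar>"
proof -
  have "cis b * cis (a - b) = cis a" by (simp add: cis_mult)
  then have e: "cis a - cis b = cis b * (cis (a - b) - 1)"
    by (simp add: right_diff_distrib)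
  define t where "t = a - b"
  have "(norm (cis t - 1))\<^sup>2 = (cos t - 1)\<^sup>2 + (sin t)\<^sup>2"
    by (simp add: cmod_power2)
  also have "\<dots> = 2 - 2 * cos t" using sin_cos_squared_add[of t] by (simp add: power2_eq_square algebra_simps)
  also have "\<dots> = 4 * (sin (t / 2))\<^sup>2"
    using cos_double_sin[of "t/2"] by simp
  also have "\<dots> \<le> 4 * (t / 2)\<^sup>2"
  proof -
    have "\<bar>sin (t/2)\<bar> \<le> \<bar>t/2\<bar>" by (rule abs_sin_x_le_abs_x)
    then have "(sin (t/2))\<^sup>2 \<le> (t/2)\<^sup>2" by (metis abs_le_square_iff)
    then show ?thesis by simp
  qed
  also have "\<dots> = t\<^sup>2" by (simp add: power2_eq_square)
  finally have "norm (cis t - 1) \<le> \<bar>t\<bar>" by (metis abs_le_square_iff abs_norm_cancel)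
  then show ?thesis unfolding e t_def by (simp add: norm_mult)
qed

definition gm :: "int \<Rightarrow> real" where "gm n = real_of_int (max 1 \<bar>n\<bar>) powr (-5/3)"

definition Sb :: real where "Sb = 1 + 2 * suminf (\<lambda>n::nat. real n powr (-5/3))"

lemma gm_nonneg: "gm n \<ge> 0" by (simp add: gm_def)

lemma sum1d_eq: "(\<Sum>n\<in>{-int K..int K}. gm n) = 1 + 2 * (\<Sum>n\<in>{1..K}. real n powr (-5/3))"
proof (induction K)
  case 0 then show ?case by (simp add: gm_def)
next
  case (Suc K)
  have s: "{-int (Suc K)..int (Suc K)} = insert (int K + 1) (insert (-(int K + 1)) {-int K..int K})"
    by auto
  have a: "max 1 \<bar>- int K - 1\<bar> = int K + 1" "max 1 \<bar>int K + 1\<bar> = int K + 1" by simp_all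
  have g1: "gm (int K + 1) = real (Suc K) powr (-5/3)" "gm (- int K - 1) = real (Suc K) powr (-5/3)"
    unfolding gm_def a by (simp_all add: add.commute)
  show ?case unfolding s using Suc by (simp add: g1)
qed

lemma sum1d: "(\<Sum>n\<in>{-int K..int K}. gm n) \<le> Sb"
proof -
  have sm: "summable (\<lambda>n::nat. real n powr (-5/3))"
    by (simp add: summable_real_powr_iff)
  have "(\<Sum>n\<in>{1..K}. real n powr (-5/3)) \<le> suminf (\<lambda>n::nat. real n powr (-5/3))"
    by (rule sum_le_suminf[OF sm]) auto
  then show ?thesis unfolding sum1d_eq Sb_def by simp
qed

definition mmk :: "int \<times> int \<times> int \<Rightarrow> real" where
  "mmk k = (case k of (k1, k2, k3) \<Rightarrow> real_of_int (max 1 (max \<bar>k1\<bar> (max \<bar>k2\<bar> \<bar>k3\<bar>))))"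

lemma mmk_ge1: "mmk k \<ge> 1" by (cases k) (simp add: mmk_def)

lemma mmk_ge: "mmk (k1, k2, k3) \<ge> \<bar>k1\<bar>" "mmk (k1, k2, k3) \<ge> \<bar>k2\<bar>" "mmk (k1, k2, k3) \<ge> \<bar>k3\<bar>"
  by (auto simp: mmk_def le_max_iff_disj simp flip: of_int_abs)

lemma mmk_gm: "1 / mmk (k1, k2, k3) ^ 5 \<le> gm k1 * gm k2 * gm k3"
proof -
  define a1 where "a1 = real_of_int (max 1 \<bar>k1\<bar>)"
  define a2 where "a2 = real_of_int (max 1 \<bar>k2\<bar>)"
  define a3 where "a3 = real_of_int (max 1 \<bar>k3\<bar>)"
  define m where "m = mmk (k1, k2, k3)"
  have a: "a1 \<ge> 1" "a2 \<ge> 1" "a3 \<ge> 1" by (simp_all add: a1_def a2_def a3_def)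
  have am: "a1 \<le> m" "a2 \<le> m" "a3 \<le> m" unfolding a1_def a2_def a3_def m_def mmk_def
    by (auto simp: le_max_iff_disj)
  have "a1 * a2 * a3 \<le> m * m * m" using a am by (intro mult_mono) auto
  then have "(m * m * m) powr (-5/3) \<le> (a1 * a2 * a3) powr (-5/3)"
    using a by (intro powr_mono2') auto
  also have "(a1 * a2 * a3) powr (-5/3) = gm k1 * gm k2 * gm k3"
    using a by (simp add: gm_def a1_def[symmetric] a2_def[symmetric] a3_def[symmetric] powr_mult)
  also have "(m * m * m) powr (-5/3) = 1 / m ^ 5"
  proof -
    have "m \<ge> 1" using mmk_ge1 m_def by simp
    then have "(m * m * m) powr (-5/3) = (m powr 3) powr (-5/3)"
      by (simp add: powr_numeral power3_eq_cube)
    also have "\<dots> = m powr (-5)" by (simp add: powr_powr)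
    also have "\<dots> = 1 / m ^ 5" using \<open>m \<ge> 1\<close> by (simp add: powr_minus powr_numeral divide_inverse)
    finally show ?thesis .
  qed
  finally show ?thesis by (simp add: m_def)
qed

definition boxK :: "nat \<Rightarrow> (int \<times> int \<times> int) set" where
  "boxK K = {-int K..int K} \<times> {-int K..int K} \<times> {-int K..int K}"

lemma sum3d: "(\<Sum>k\<in>boxK K. 1 / mmk k ^ 5) \<le> Sb ^ 3"
proof -
  let ?I = "{-int K..int K}"
  have "(\<Sum>k\<in>boxK K. 1 / mmk k ^ 5) \<le> (\<Sum>k\<in>boxK K. (case k of (k1, k2, k3) \<Rightarrow> gm k1 * gm k2 * gm k3))"
    by (intro sum_mono) (auto simp: mmk_gm)
  also have "\<dots> = (\<Sum>k1\<in>?I. \<Sum>k2\<in>?I. \<Sum>k3\<in>?I. gm k1 * gm k2 * gm k3)"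
    unfolding boxK_def by (simp add: sum.cartesian_product)
  also have "\<dots> = (\<Sum>k1\<in>?I. \<Sum>k2\<in>?I. gm k1 * gm k2 * (\<Sum>k3\<in>?I. gm k3))"
    by (simp add: sum_distrib_left)
  also have "\<dots> = (\<Sum>k1\<in>?I. gm k1 * (\<Sum>k2\<in>?I. gm k2) * (\<Sum>k3\<in>?I. gm k3))"
    by (simp only: sum_distrib_left[symmetric] sum_distrib_right[symmetric])
  also have "\<dots> = (\<Sum>n\<in>?I. gm n) ^ 3"
    by (simp add: sum_distrib_right power3_eq_cube)
  also have "\<dots> \<le> Sb ^ 3"
    using sum1d by (intro power_mono) (auto intro: sum_nonneg gm_nonneg)
  finally show ?thesis .
qed



lemma coeff_eq: "fourier_coeff L f (k1, k2, k3) = complex_of_real (1 / L ^ 3) * FI L f k1 k2 k3"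
  by (simp add: fourier_coeff_def FI_def)

lemma coeff_decay:
  assumes L: "L > 0" and C: "Ck 6 Phi" and per: "periodic3 L Phi"
  shows "\<exists>D\<ge>0. \<forall>k. norm (fourier_coeff L Phi k) \<le> D / mmk k ^ 6"
proof -
  obtain C0 where C0: "C0 \<ge> 0" "\<forall>k1 k2 k3. norm (FI L Phi k1 k2 k3) \<le>
            C0 / real_of_int (max 1 (max \<bar>k1\<bar> (max \<bar>k2\<bar> \<bar>k3\<bar>))) ^ 6"
    using decay[OF L C per] by blast
  show ?thesis
  proof (intro exI[of _ "C0 / L ^ 3"] conjI allI)
    show "0 \<le> C0 / L ^ 3" using C0 L by simp
    fix k :: "int \<times> int \<times> int"
    obtain k1 k2 k3 where k: "k = (k1, k2, k3)" by (cases k)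
    have "norm (fourier_coeff L Phi k) = norm (FI L Phi k1 k2 k3) / L ^ 3"
      using L by (simp add: k coeff_eq norm_mult norm_divide norm_power)
    also have "\<dots> \<le> (C0 / mmk k ^ 6) / L ^ 3"
      using C0(2) L by (intro divide_right_mono) (auto simp: k mmk_def)
    also have "\<dots> = C0 / L ^ 3 / mmk k ^ 6" by simp
    finally show "norm (fourier_coeff L Phi k) \<le> C0 / L ^ 3 / mmk k ^ 6" .
  qed
qed

definition ph :: "real \<Rightarrow> int \<times> int \<times> int \<Rightarrow> real \<Rightarrow> real \<Rightarrow> real \<Rightarrow> real" where
  "ph L k x y z = (case k of (k1, k2, k3) \<Rightarrow> 2 * pi * (of_int k1 * x + of_int k2 * y + of_int k3 * z) / L)"

lemma fp_eq: "fourier_proj L K f (x, y, z) =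
   Re (\<Sum>k\<in>boxK K. fourier_coeff L f k * cis (ph L k x y z))"
proof -
  have "\<And>k. (case k of (k1, k2, k3) \<Rightarrow> cis (2 * pi * (of_int k1 * x + of_int k2 * y + of_int k3 * z) / L))
      = cis (ph L k x y z)" by (auto simp: ph_def split: prod.splits)
  then show ?thesis by (simp add: fourier_proj_def boxK_def)
qed

lemma D6_le_5: "D \<ge> 0 \<Longrightarrow> D / mmk k ^ 6 \<le> D / mmk k ^ 5"
proof -
  assume D: "D \<ge> 0"
  have m: "mmk k \<ge> 1" by (rule mmk_ge1)
  then have "mmk k ^ 5 \<le> mmk k ^ 6" by (intro power_increasing) auto
  moreover have "mmk k ^ 5 > 0" using m by simp
  ultimately show ?thesis using D by (intro divide_left_mono) auto
qed

lemma fp_bound: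
  assumes D: "D \<ge> 0" "\<forall>k. norm (fourier_coeff L f k) \<le> D / mmk k ^ 6"
  shows "\<bar>fourier_proj L K f (x, y, z)\<bar> \<le> D * Sb ^ 3"
proof -
  have "\<bar>fourier_proj L K f (x, y, z)\<bar> \<le> norm (\<Sum>k\<in>boxK K. fourier_coeff L f k * cis (ph L k x y z))"
    unfolding fp_eq by (rule abs_Re_le_cmod)
  also have "\<dots> \<le> (\<Sum>k\<in>boxK K. norm (fourier_coeff L f k * cis (ph L k x y z)))"
    by (rule norm_sum)
  also have "\<dots> \<le> (\<Sum>k\<in>boxK K. D / mmk k ^ 5)"
  proof (intro sum_mono)
    fix k
    have "norm (fourier_coeff L f k * cis (ph L k x y z)) = norm (fourier_coeff L f k)" by (simp add: norm_mult)
    also have "\<dots> \<le> D / mmk k ^ 6" using D(2) by blast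
    also have "\<dots> \<le> D / mmk k ^ 5" using D6_le_5[OF D(1)] .
    finally show "norm (fourier_coeff L f k * cis (ph L k x y z)) \<le> D / mmk k ^ 5" .
  qed
  also have "\<dots> = D * (\<Sum>k\<in>boxK K. 1 / mmk k ^ 5)"
    by (simp add: sum_distrib_left)
  also have "\<dots> \<le> D * Sb ^ 3"
    using sum3d D by (intro mult_left_mono) auto
  finally show ?thesis .
qed

lemma fp_lip:
  assumes L: "L > 0" and D: "D \<ge> 0" "\<forall>k. norm (fourier_coeff L f k) \<le> D / mmk k ^ 6"
  shows "\<bar>fourier_proj L K f (x + u, y + v, z + w) - fourier_proj L K f (x, y, z)\<bar>
     \<le> (\<bar>u\<bar> + \<bar>v\<bar> + \<bar>w\<bar>) * (2 * pi / L) * D * Sb ^ 3"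
proof -
  define E where "E = (\<bar>u\<bar> + \<bar>v\<bar> + \<bar>w\<bar>) * (2 * pi / L)"
  have E0: "E \<ge> 0" using L by (simp add: E_def)
  have phd: "\<bar>ph L k (x + u) (y + v) (z + w) - ph L k x y z\<bar> \<le> mmk k * E" for k
  proof -
    obtain k1 k2 k3 where k: "k = (k1, k2, k3)" by (cases k)
    have "ph L k (x + u) (y + v) (z + w) - ph L k x y z = (2 * pi / L) * (of_int k1 * u + of_int k2 * v + of_int k3 * w)"
      using L by (simp add: k ph_def field_simps)
    also have "\<bar>\<dots>\<bar> = (2 * pi / L) * \<bar>of_int k1 * u + of_int k2 * v + of_int k3 * w\<bar>"
      using L by (simp add: abs_mult)
    also have "\<dots> \<le> (2 * pi / L) * (mmk k * (\<bar>u\<bar> + \<bar>v\<bar> + \<bar>w\<bar>))"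
    proof (intro mult_left_mono)
      have "\<bar>of_int k1 * u\<bar> \<le> mmk k * \<bar>u\<bar>"
      proof -
        have "\<bar>real_of_int k1\<bar> \<le> mmk k" unfolding k by (auto simp: mmk_def le_max_iff_disj simp flip: of_int_abs)
        then show ?thesis by (simp add: abs_mult mult_right_mono)
      qed
      moreover have "\<bar>of_int k2 * v\<bar> \<le> mmk k * \<bar>v\<bar>"
      proof -
        have "\<bar>real_of_int k2\<bar> \<le> mmk k" unfolding k by (auto simp: mmk_def le_max_iff_disj simp flip: of_int_abs)
        then show ?thesis by (simp add: abs_mult mult_right_mono)
      qed
      moreover have "\<bar>of_int k3 * w\<bar> \<le> mmk k * \<bar>w\<bar>"
      proof -
        have "\<bar>real_of_int k3\<bar> \<le> mmk k" unfolding k by (auto simp: mmk_def le_max_iff_disj simp flip: of_int_abs)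
        then show ?thesis by (simp add: abs_mult mult_right_mono)
      qed
      ultimately show "\<bar>of_int k1 * u + of_int k2 * v + of_int k3 * w\<bar> \<le> mmk k * (\<bar>u\<bar> + \<bar>v\<bar> + \<bar>w\<bar>)"
        by (simp add: distrib_left) linarith
    qed (use L in simp)
    finally show ?thesis by (simp add: E_def mult_ac)
  qed
  have deq: "fourier_proj L K f (x + u, y + v, z + w) - fourier_proj L K f (x, y, z) =
     Re (\<Sum>k\<in>boxK K. fourier_coeff L f k * (cis (ph L k (x + u) (y + v) (z + w)) - cis (ph L k x y z)))"
  proof -
    have "(\<Sum>k\<in>boxK K. fourier_coeff L f k * (cis (ph L k (x + u) (y + v) (z + w)) - cis (ph L k x y z)))
      = (\<Sum>k\<in>boxK K. fourier_coeff L f k * cis (ph L k (x + u) (y + v) (z + w))) -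
        (\<Sum>k\<in>boxK K. fourier_coeff L f k * cis (ph L k x y z))"
      by (simp only: right_diff_distrib sum_subtractf)
    then show ?thesis unfolding fp_eq by (simp only: minus_complex.sel)
  qed
  have "\<bar>fourier_proj L K f (x + u, y + v, z + w) - fourier_proj L K f (x, y, z)\<bar> \<le> norm (\<Sum>k\<in>boxK K. fourier_coeff L f k * (cis (ph L k (x + u) (y + v) (z + w)) - cis (ph L k x y z)))"
    unfolding deq by (rule abs_Re_le_cmod)
  also have "\<dots> \<le> (\<Sum>k\<in>boxK K. norm (fourier_coeff L f k * (cis (ph L k (x + u) (y + v) (z + w)) - cis (ph L k x y z))))"
    by (rule norm_sum)
  also have "\<dots> \<le> (\<Sum>k\<in>boxK K. E * (D / mmk k ^ 5))"
  proof (intro sum_mono)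
    fix k
    have m: "mmk k \<ge> 1" by (rule mmk_ge1)
    have "norm (fourier_coeff L f k * (cis (ph L k (x + u) (y + v) (z + w)) - cis (ph L k x y z)))
        \<le> (D / mmk k ^ 6) * (mmk k * E)"
    proof -
      have n1: "norm (fourier_coeff L f k) \<le> D / mmk k ^ 6" using D(2) by blast
      have n2: "norm (cis (ph L k (x + u) (y + v) (z + w)) - cis (ph L k x y z)) \<le> mmk k * E"
        by (rule order_trans[OF cis_diff_le phd])
      have "0 \<le> D / mmk k ^ 6" using D(1) m by simp
      then show ?thesis unfolding norm_mult by (rule mult_mono[OF n1 n2]) simp
    qed
    also have "\<dots> = E * (D / mmk k ^ 5)" using m by (simp add: field_simps power_eq_if)
    finally show "norm (fourier_coeff L f k * (cis (ph L k (x + u) (y + v) (z + w)) - cis (ph L k x y z)))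
        \<le> E * (D / mmk k ^ 5)" .
  qed
  also have "\<dots> = E * D * (\<Sum>k\<in>boxK K. 1 / mmk k ^ 5)"
    by (simp add: sum_distrib_left)
  also have "\<dots> \<le> E * D * Sb ^ 3"
    using sum3d D E0 by (intro mult_left_mono) auto
  finally show ?thesis by (simp add: E_def mult_ac)
qed



lemma sum_shift_per:
  fixes F :: "int \<Rightarrow> 'a::comm_monoid_add"
  assumes per: "\<And>i. F (i + int N) = F i"
  shows "(\<Sum>i\<in>{1..int N}. F (i + 1)) = (\<Sum>i\<in>{1..int N}. F i)"
proof (cases "N = 0")
  case True then show ?thesis by simp
next
  case False
  have im: "(\<lambda>i. i + 1) ` {1..int N} = {2..int N + 1}"
  proof
    show "{2..int N + 1} \<subseteq> (\<lambda>i. i + 1) ` {1..int N}"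
    proof
      fix j assume "j \<in> {2..int N + 1}"
      then have "j - 1 \<in> {1..int N}" "j = (j - 1) + 1" by auto
      then show "j \<in> (\<lambda>i. i + 1) ` {1..int N}" by blast
    qed
  qed auto
  have "(\<Sum>i\<in>{1..int N}. F (i + 1)) = (\<Sum>j\<in>{2..int N + 1}. F j)"
    by (subst im[symmetric], subst sum.reindex) (auto simp: inj_on_def)
  also have "{2..int N + 1} = insert (int N + 1) {2..int N}" using False by auto
  also have "(\<Sum>j\<in>insert (int N + 1) {2..int N}. F j) = F (int N + 1) + (\<Sum>j\<in>{2..int N}. F j)"
    by (subst sum.insert) auto
  also have "F (int N + 1) = F 1" using per[of 1] by (simp add: add.commute)
  also have "F 1 + (\<Sum>j\<in>{2..int N}. F j) = (\<Sum>j\<in>insert 1 {2..int N}. F j)"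
    by (subst sum.insert) auto
  also have "insert 1 {2..int N} = {1..int N}" using False by auto
  finally show ?thesis .
qed

lemma sum_shift_per':
  fixes F :: "int \<Rightarrow> 'a::comm_monoid_add"
  assumes per: "\<And>i. F (i + int N) = F i"
  shows "(\<Sum>i\<in>{1..int N}. F (i - 1)) = (\<Sum>i\<in>{1..int N}. F i)"
proof -
  have "(\<Sum>i\<in>{1..int N}. (\<lambda>i. F (i - 1)) (i + 1)) = (\<Sum>i\<in>{1..int N}. (\<lambda>i. F (i - 1)) i)"
  proof (rule sum_shift_per)
    fix i
    show "F (i + int N - 1) = F (i - 1)" using per[of "i - 1"] by (simp add: algebra_simps)
  qed
  then show ?thesis by simp
qed

lemma geo_zero:
  assumes n: "n \<noteq> 0" "\<bar>n\<bar> < int N"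
  shows "(\<Sum>i\<in>{1..int N}. cis (2 * pi * of_int n * (of_int i - 1/2) / real N)) = 0"
proof -
  have N: "N > 0" using n by auto
  define F where "F i = cis (2 * pi * of_int n * (of_int i - 1/2) / real N)" for i :: int
  define w where "w = cis (2 * pi * of_int n / real N)"
  have per: "F (i + int N) = F i" for i
  proof -
    have "2 * pi * of_int n * (of_int (i + int N) - 1/2) / real N =
          2 * pi * of_int n * (of_int i - 1/2) / real N + 2 * pi * of_int n"
      using N by (simp add: field_simps)
    then show ?thesis unfolding F_def by (simp add: cis_mult[symmetric])
  qed
  have sh: "F (i + 1) = w * F i" for i
  proof -
    have "2 * pi * of_int n * (of_int (i + 1) - 1/2) / real N =
          2 * pi * of_int n / real N + 2 * pi * of_int n * (of_int i - 1/2) / real N"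
      using N by (simp add: field_simps)
    then show ?thesis unfolding F_def w_def by (simp add: cis_mult)
  qed
  have w1: "w \<noteq> 1"
  proof
    assume "w = 1"
    then have "Re w = 1" by simp
    then have "cos (2 * pi * of_int n / real N) = 1" unfolding w_def by simp
    then obtain m :: int where m: "2 * pi * of_int n / real N = of_int m * 2 * pi"
      using cos_one_2pi_int by blast
    then have "real_of_int n = real_of_int m * real N" using N by (simp add: field_simps)
    then have nm: "n = m * int N" by (metis of_int_eq_iff of_int_mult of_int_of_nat_eq)
    show False
    proof (cases "m = 0")
      case True then show False using nm n by simp
    next
      case False
      then have "\<bar>m\<bar> \<ge> 1" by simp
      then have "\<bar>m\<bar> * int N \<ge> int N" using N by (simp add: mult_le_cancel_right1)
      then show False using nm n by (simp add: abs_mult)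
    qed
  qed
  have "(\<Sum>i\<in>{1..int N}. F (i + 1)) = (\<Sum>i\<in>{1..int N}. F i)" by (rule sum_shift_per[of F N, OF per])
  then have "w * (\<Sum>i\<in>{1..int N}. F i) = (\<Sum>i\<in>{1..int N}. F i)"
    by (simp add: sh sum_distrib_left)
  then have "(w - 1) * (\<Sum>i\<in>{1..int N}. F i) = 0" by (simp add: algebra_simps)
  then show ?thesis using w1 unfolding F_def by simp
qed

lemma geo_sum:
  assumes n: "\<bar>n\<bar> < int N"
  shows "(\<Sum>i\<in>{1..int N}. cis (2 * pi * of_int n * (of_int i - 1/2) / real N)) = (if n = 0 then of_nat N else 0)"
  using geo_zero[OF _ n] by simp



lemma FI000:
  assumes c: "continuous_on UNIV Phi"
  shows "FI L Phi 0 0 0 = complex_of_real (integral (Omega L) Phi)"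
proof -
  have "FI L Phi 0 0 0 = integral (Omega L) (\<lambda>p. complex_of_real (Phi p))"
    unfolding FI_def by (rule integral_cong) auto
  also have "\<dots> = complex_of_real (integral (Omega L) Phi)"
  proof -
    have "Phi integrable_on Omega L" unfolding Omega_def
      by (rule integrable_continuous, rule continuous_on_subset[OF c]) auto
    then have "((\<lambda>p. complex_of_real (Phi p)) has_integral complex_of_real (integral (Omega L) Phi)) (Omega L)"
      by (intro has_integral_of_real) auto
    then show ?thesis by (rule integral_unique)
  qed
  finally show ?thesis .
qed

lemma mean_id:
  fixes L :: real and K :: nat
  assumes L: "L > 0" and c: "continuous_on UNIV Phi"
    and N: "N = 2 * K + 1" and h: "h = L / real N"
  shows "integral (Omega L) Phi = ip h N (eval_grid h (fourier_proj L K Phi)) (\<lambda>i j k. 1)"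
proof -
  have N0: "real N > 0" using N by simp
  define E where "E n i = cis (2 * pi * of_int n * (of_int i - 1/2) / real N)" for n i :: int
  define G where "G n = (\<Sum>i\<in>{1..int N}. E n i)" for n
  define c where "c k = fourier_coeff L Phi k" for k
  define T where "T k i j l = c k * cis (ph L k ((of_int i - 1/2) * h) ((of_int j - 1/2) * h) ((of_int l - 1/2) * h))"
    for k and i j l :: int
  have A: "cis (ph L k ((of_int i - 1/2) * h) ((of_int j - 1/2) * h) ((of_int l - 1/2) * h)) =
            (case k of (a, b, d) \<Rightarrow> E a i * E b j * E d l)" for k i j l
  proof -
    obtain a b d where k: "k = (a, b, d)" by (cases k)
    have "ph L k ((of_int i - 1/2) * h) ((of_int j - 1/2) * h) ((of_int l - 1/2) * h) =
       2 * pi * of_int a * (of_int i - 1/2) / real N + 2 * pi * of_int b * (of_int j - 1/2) / real N +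
       2 * pi * of_int d * (of_int l - 1/2) / real N"
      using L N0 unfolding k ph_def h by (simp add: field_simps)
    then show ?thesis unfolding k E_def by (simp add: cis_mult)
  qed
  have Bk: "(\<Sum>i\<in>{1..int N}. \<Sum>j\<in>{1..int N}. \<Sum>l\<in>{1..int N}. T k i j l) =
      c k * (case k of (a, b, d) \<Rightarrow> G a * G b * G d)" for k
  proof -
    obtain a b d where k: "k = (a, b, d)" by (cases k)
    have "(\<Sum>i\<in>{1..int N}. \<Sum>j\<in>{1..int N}. \<Sum>l\<in>{1..int N}. T k i j l) =
       c k * (\<Sum>i\<in>{1..int N}. \<Sum>j\<in>{1..int N}. \<Sum>l\<in>{1..int N}. E a i * E b j * E d l)"
      unfolding T_def A k by (simp add: sum_distrib_left)
    also have "(\<Sum>i\<in>{1..int N}. \<Sum>j\<in>{1..int N}. \<Sum>l\<in>{1..int N}. E a i * E b j * E d l) = G a * G b * G d"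
    proof -
      have "(\<Sum>i\<in>{1..int N}. \<Sum>j\<in>{1..int N}. \<Sum>l\<in>{1..int N}. E a i * E b j * E d l) =
          (\<Sum>i\<in>{1..int N}. \<Sum>j\<in>{1..int N}. E a i * E b j * G d)"
        unfolding G_def by (simp add: sum_distrib_left)
      also have "\<dots> = (\<Sum>i\<in>{1..int N}. E a i * G b * G d)"
        unfolding G_def by (simp only: sum_distrib_left[symmetric] sum_distrib_right[symmetric])
      also have "\<dots> = G a * G b * G d"
        unfolding G_def by (simp add: sum_distrib_right)
      finally show ?thesis .
    qed
    finally show ?thesis by (simp add: k)
  qed
  have Ck: "(case k of (a, b, d) \<Rightarrow> G a * G b * G d) = (if k = (0, 0, 0) then of_nat N ^ 3 else 0)"
    if "k \<in> boxK K" for k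
  proof -
    obtain a b d where k: "k = (a, b, d)" by (cases k)
    have "\<bar>a\<bar> < int N" "\<bar>b\<bar> < int N" "\<bar>d\<bar> < int N" using that N by (auto simp: boxK_def k)
    then show ?thesis unfolding k G_def E_def by (simp add: geo_sum power3_eq_cube)
  qed
  have z: "(0, 0, 0) \<in> boxK K" by (simp add: boxK_def)
  have "ip h N (eval_grid h (fourier_proj L K Phi)) (\<lambda>i j k. 1) =
     h ^ 3 * (\<Sum>i\<in>{1..int N}. \<Sum>j\<in>{1..int N}. \<Sum>l\<in>{1..int N}. Re (\<Sum>k\<in>boxK K. T k i j l))"
    unfolding ip_def gsum_def eval_grid_def fp_eq T_def c_def by simp
  also have "(\<Sum>i\<in>{1..int N}. \<Sum>j\<in>{1..int N}. \<Sum>l\<in>{1..int N}. Re (\<Sum>k\<in>boxK K. T k i j l)) =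
      Re (\<Sum>i\<in>{1..int N}. \<Sum>j\<in>{1..int N}. \<Sum>l\<in>{1..int N}. \<Sum>k\<in>boxK K. T k i j l)"
    by simp
  also have "(\<Sum>i\<in>{1..int N}. \<Sum>j\<in>{1..int N}. \<Sum>l\<in>{1..int N}. \<Sum>k\<in>boxK K. T k i j l) =
     (\<Sum>k\<in>boxK K. \<Sum>i\<in>{1..int N}. \<Sum>j\<in>{1..int N}. \<Sum>l\<in>{1..int N}. T k i j l)"
    by (simp only: sum.swap[where A = "{1..int N}" and B = "boxK K"])
  also have "\<dots> = (\<Sum>k\<in>boxK K. c k * (if k = (0, 0, 0) then of_nat N ^ 3 else 0))"
    using Bk Ck by (intro sum.cong) auto
  also have "\<dots> = c (0, 0, 0) * of_nat N ^ 3"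
  proof -
    have f: "finite (boxK K)" by (simp add: boxK_def)
    have "(\<Sum>k\<in>boxK K. c k * (if k = (0, 0, 0) then of_nat N ^ 3 else 0)) =
          (\<Sum>k\<in>boxK K. if k = (0, 0, 0) then c (0,0,0) * of_nat N ^ 3 else 0)"
      by (intro sum.cong) auto
    also have "\<dots> = c (0, 0, 0) * of_nat N ^ 3" by (subst sum.delta[OF f]) (use z in simp)
    finally show ?thesis .
  qed
  finally have "ip h N (eval_grid h (fourier_proj L K Phi)) (\<lambda>i j k. 1) = h ^ 3 * real N ^ 3 * Re (c (0, 0, 0))"
    by simp
  also have "h ^ 3 * real N ^ 3 = L ^ 3" using N0 unfolding h by (simp add: power_divide)
  also have "c (0, 0, 0) = complex_of_real (1 / L ^ 3) * complex_of_real (integral (Omega L) Phi)"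
    unfolding c_def coeff_eq FI000[OF c] ..
  finally show ?thesis using L by simp
qed



lemma gsum_add: "gsum N (\<lambda>i j k. f i j k + g i j k) = gsum N f + gsum N g"
  by (simp add: gsum_def sum.distrib)
lemma gsum_diff: "gsum N (\<lambda>i j k. f i j k - g i j k) = gsum N f - gsum N g"
  by (simp add: gsum_def sum_subtractf)
lemma gsum_cmult: "gsum N (\<lambda>i j k. c * f i j k) = c * gsum N f"
  by (simp add: gsum_def sum_distrib_left)
lemma gsum_mono: "(\<And>i j k. f i j k \<le> g i j k) \<Longrightarrow> gsum N f \<le> gsum N g"
  unfolding gsum_def by (intro sum_mono) auto
lemma gsum_cong: "(\<And>i j k. f i j k = g i j k) \<Longrightarrow> gsum N f = gsum N g"
  by (simp add: gsum_def)
lemma gsum_nonneg: "(\<And>i j k. 0 \<le> f i j k) \<Longrightarrow> 0 \<le> gsum N f"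
  unfolding gsum_def by (intro sum_nonneg) auto

lemma gshift_x:
  assumes "\<And>i j k. G (i + int N) j k = G i j k"
  shows "gsum N (\<lambda>i j k. G (i - 1) j k) = gsum N G"
  unfolding gsum_def
  by (rule sum_shift_per'[where F = "\<lambda>i. \<Sum>j\<in>{1..int N}. \<Sum>k\<in>{1..int N}. G i j k"]) (simp add: assms)

lemma gshift_y:
  assumes "\<And>i j k. G i (j + int N) k = G i j k"
  shows "gsum N (\<lambda>i j k. G i (j - 1) k) = gsum N G"
  unfolding gsum_def
  by (intro sum.cong refl sum_shift_per'[where F = "\<lambda>j. \<Sum>k\<in>{1..int N}. G _ j k"]) (simp add: assms)

lemma gshift_z:
  assumes "\<And>i j k. G i j (k + int N) = G i j k"
  shows "gsum N (\<lambda>i j k. G i j (k - 1)) = gsum N G"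
  unfolding gsum_def
  by (intro sum.cong refl sum_shift_per'[where F = "\<lambda>k. G _ _ k"]) (simp add: assms)

lemma gsum_neg: "gsum N (\<lambda>i j k. - f i j k) = - gsum N f"
  by (simp add: gsum_def sum_negf)

lemma sbp_x:
  assumes u: "\<And>i j k. u (i + int N) j k = u i j k" and A: "\<And>i j k. A (i + int N) j k = A i j k"
  shows "gsum N (\<lambda>i j k. u i j k * ((A i j k - A (i - 1) j k) / h)) = - gsum N (\<lambda>i j k. Dx h u i j k * A i j k)"
proof -
  define G where "G i j k = u (i + 1) j k * A i j k / h" for i j k
  have uu: "u (i + int N + 1) j k = u (i + 1) j k" for i j k
    using u[of "i + 1" j k] by (simp add: algebra_simps)
  have "gsum N (\<lambda>i j k. G (i - 1) j k) = gsum N G"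
    by (rule gshift_x) (simp add: G_def A uu)
  then have e: "gsum N (\<lambda>i j k. u i j k * A (i - 1) j k / h) = gsum N (\<lambda>i j k. u (i + 1) j k * A i j k / h)"
    by (simp add: G_def[abs_def])
  have "gsum N (\<lambda>i j k. u i j k * ((A i j k - A (i - 1) j k) / h)) =
        gsum N (\<lambda>i j k. u i j k * A i j k / h - u i j k * A (i - 1) j k / h)"
    by (rule gsum_cong) (simp add: diff_divide_distrib right_diff_distrib)
  also have "\<dots> = gsum N (\<lambda>i j k. u i j k * A i j k / h) - gsum N (\<lambda>i j k. u (i + 1) j k * A i j k / h)"
    by (simp only: gsum_diff e)
  also have "\<dots> = gsum N (\<lambda>i j k. u i j k * A i j k / h - u (i + 1) j k * A i j k / h)"
    by (simp only: gsum_diff)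
  also have "\<dots> = gsum N (\<lambda>i j k. - (Dx h u i j k * A i j k))"
    by (rule gsum_cong) (simp add: Dx_def diff_divide_distrib left_diff_distrib)
  also have "\<dots> = - gsum N (\<lambda>i j k. Dx h u i j k * A i j k)"
    by (rule gsum_neg)
  finally show ?thesis .
qed

lemma sbp_y:
  assumes u: "\<And>i j k. u i (j + int N) k = u i j k" and A: "\<And>i j k. A i (j + int N) k = A i j k"
  shows "gsum N (\<lambda>i j k. u i j k * ((A i j k - A i (j - 1) k) / h)) = - gsum N (\<lambda>i j k. Dy h u i j k * A i j k)"
proof -
  define G where "G i j k = u i (j + 1) k * A i j k / h" for i j k
  have uu: "u i (j + int N + 1) k = u i (j + 1) k" for i j k
    using u[of i "j + 1" k] by (simp add: algebra_simps)
  have "gsum N (\<lambda>i j k. G i (j - 1) k) = gsum N G"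
    by (rule gshift_y) (simp add: G_def A uu)
  then have e: "gsum N (\<lambda>i j k. u i j k * A i (j - 1) k / h) = gsum N (\<lambda>i j k. u i (j + 1) k * A i j k / h)"
    by (simp add: G_def[abs_def])
  have "gsum N (\<lambda>i j k. u i j k * ((A i j k - A i (j - 1) k) / h)) =
        gsum N (\<lambda>i j k. u i j k * A i j k / h - u i j k * A i (j - 1) k / h)"
    by (rule gsum_cong) (simp add: diff_divide_distrib right_diff_distrib)
  also have "\<dots> = gsum N (\<lambda>i j k. u i j k * A i j k / h) - gsum N (\<lambda>i j k. u i (j + 1) k * A i j k / h)"
    by (simp only: gsum_diff e)
  also have "\<dots> = gsum N (\<lambda>i j k. u i j k * A i j k / h - u i (j + 1) k * A i j k / h)"
    by (simp only: gsum_diff)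
  also have "\<dots> = gsum N (\<lambda>i j k. - (Dy h u i j k * A i j k))"
    by (rule gsum_cong) (simp add: Dy_def diff_divide_distrib left_diff_distrib)
  also have "\<dots> = - gsum N (\<lambda>i j k. Dy h u i j k * A i j k)"
    by (rule gsum_neg)
  finally show ?thesis .
qed

lemma sbp_z:
  assumes u: "\<And>i j k. u i j (k + int N) = u i j k" and A: "\<And>i j k. A i j (k + int N) = A i j k"
  shows "gsum N (\<lambda>i j k. u i j k * ((A i j k - A i j (k - 1)) / h)) = - gsum N (\<lambda>i j k. Dz h u i j k * A i j k)"
proof -
  define G where "G i j k = u i j (k + 1) * A i j k / h" for i j k
  have uu: "u i j (k + int N + 1) = u i j (k + 1)" for i j k
    using u[of i j "k + 1"] by (simp add: algebra_simps)
  have "gsum N (\<lambda>i j k. G i j (k - 1)) = gsum N G"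
    by (rule gshift_z) (simp add: G_def A uu)
  then have e: "gsum N (\<lambda>i j k. u i j k * A i j (k - 1) / h) = gsum N (\<lambda>i j k. u i j (k + 1) * A i j k / h)"
    by (simp add: G_def[abs_def])
  have "gsum N (\<lambda>i j k. u i j k * ((A i j k - A i j (k - 1)) / h)) =
        gsum N (\<lambda>i j k. u i j k * A i j k / h - u i j k * A i j (k - 1) / h)"
    by (rule gsum_cong) (simp add: diff_divide_distrib right_diff_distrib)
  also have "\<dots> = gsum N (\<lambda>i j k. u i j k * A i j k / h) - gsum N (\<lambda>i j k. u i j (k + 1) * A i j k / h)"
    by (simp only: gsum_diff e)
  also have "\<dots> = gsum N (\<lambda>i j k. u i j k * A i j k / h - u i j (k + 1) * A i j k / h)"
    by (simp only: gsum_diff)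
  also have "\<dots> = gsum N (\<lambda>i j k. - (Dz h u i j k * A i j k))"
    by (rule gsum_cong) (simp add: Dz_def diff_divide_distrib left_diff_distrib)
  also have "\<dots> = - gsum N (\<lambda>i j k. Dz h u i j k * A i j k)"
    by (rule gsum_neg)
  finally show ?thesis .
qed



definition Sx :: "real \<Rightarrow> real" where "Sx x = (1 + x) * ln (1 + x) + (1 - x) * ln (1 - x)"
definition grad2 :: "real \<Rightarrow> grid \<Rightarrow> grid" where
  "grad2 h f i j k = (Dx h f i j k)\<^sup>2 + (Dy h f i j k)\<^sup>2 + (Dz h f i j k)\<^sup>2"

lemma energy_repr: "energy eps th h N f =
   h ^ 3 * gsum N (\<lambda>i j k. Sx (f i j k) - th / 2 * (f i j k)\<^sup>2) + eps\<^sup>2 / 2 * (h ^ 3 * gsum N (grad2 h f))"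
proof -
  define gA where "gA = gsum N (\<lambda>i j k. (1 + f i j k) * ln (1 + f i j k))"
  define gB where "gB = gsum N (\<lambda>i j k. (1 - f i j k) * ln (1 - f i j k))"
  define gC where "gC = gsum N (\<lambda>i j k. f i j k * f i j k)"
  define gG where "gG = gsum N (grad2 h f)"
  have 1: "gsum N (\<lambda>i j k. Sx (f i j k) - th / 2 * (f i j k)\<^sup>2) = gA + gB - th / 2 * gC"
    unfolding Sx_def gA_def gB_def gC_def by (simp only: gsum_add gsum_diff gsum_cmult power2_eq_square)
  have 2: "energy eps th h N f = h ^ 3 * gA + h ^ 3 * gB + eps\<^sup>2 / 2 * (h ^ 3 * gG) - th / 2 * (h ^ 3 * gC)"
    unfolding energy_def ip_def grad_norm_sq_def gA_def gB_def gC_def gG_def grad2_def[abs_def] ..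
  show ?thesis unfolding 1 2 gG_def[symmetric] by (simp add: algebra_simps)
qed

lemma ln_ineq: "(p::real) > 0 \<Longrightarrow> q > 0 \<Longrightarrow> p * (ln p - ln q) \<ge> p - q"
proof -
  assume p: "p > 0" and q: "q > 0"
  have "ln (q / p) \<le> q / p - 1" using p q by (intro ln_le_minus_one) auto
  then have "ln q - ln p \<le> q / p - 1" using p q by (simp add: ln_div)
  then have "p * (ln q - ln p) \<le> p * (q / p - 1)" using p by (intro mult_left_mono) auto
  then show ?thesis using p by (simp add: algebra_simps)
qed

lemma Sx_convex:
  assumes a: "\<bar>a\<bar> < 1" and b: "\<bar>b\<bar> < 1"
  shows "Sx a - Sx b \<le> (ln (1 + a) - ln (1 - a)) * (a - b)"
proof -
  have 1: "(1 + b) * (ln (1 + b) - ln (1 + a)) \<ge> (1 + b) - (1 + a)" using a b by (intro ln_ineq) auto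
  have 2: "(1 - b) * (ln (1 - b) - ln (1 - a)) \<ge> (1 - b) - (1 - a)" using a b by (intro ln_ineq) auto
  show ?thesis using 1 2 unfolding Sx_def by (simp add: algebra_simps)
qed

lemma Sx_nonneg: "\<bar>a\<bar> < 1 \<Longrightarrow> Sx a \<ge> 0"
  using Sx_convex[of 0 a] by (simp add: Sx_def)

lemma per_x: "grid_periodic N f \<Longrightarrow> f (i + int N) j k = f i j k"
  and per_y: "grid_periodic N f \<Longrightarrow> f i (j + int N) k = f i j k"
  and per_z: "grid_periodic N f \<Longrightarrow> f i j (k + int N) = f i j k"
  by (simp_all add: grid_periodic_def)

lemma per_shift: "grid_periodic N f \<Longrightarrow> f (i + int N + a) j k = f (i + a) j k"
   "grid_periodic N f \<Longrightarrow> f i (j + int N + a) k = f i (j + a) k"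
   "grid_periodic N f \<Longrightarrow> f i j (k + int N + a) = f i j (k + a)"
  using per_x[of N f "i + a" j k] per_y[of N f i "j + a" k] per_z[of N f i j "k + a"]
  by (simp_all add: algebra_simps)

lemma per_D: "grid_periodic N f \<Longrightarrow> grid_periodic N (Dx h f)"
  "grid_periodic N f \<Longrightarrow> grid_periodic N (Dy h f)"
  "grid_periodic N f \<Longrightarrow> grid_periodic N (Dz h f)"
  by (auto simp: grid_periodic_def Dx_def Dy_def Dz_def per_shift)

lemma per_M: "grid_periodic N f \<Longrightarrow> grid_periodic N (Mx M f)"
  "grid_periodic N f \<Longrightarrow> grid_periodic N (My M f)"
  "grid_periodic N f \<Longrightarrow> grid_periodic N (Mz M f)"
  by (auto simp: grid_periodic_def Mx_def My_def Mz_def per_shift)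

lemma per_mult: "grid_periodic N f \<Longrightarrow> grid_periodic N g \<Longrightarrow> grid_periodic N (\<lambda>i j k. f i j k * g i j k)"
  and per_diff: "grid_periodic N f \<Longrightarrow> grid_periodic N g \<Longrightarrow> grid_periodic N (\<lambda>i j k. f i j k - g i j k)"
  by (auto simp: grid_periodic_def)

lemma sbp_all:
  assumes u: "grid_periodic N u" and A: "grid_periodic N A" and B: "grid_periodic N B" and C: "grid_periodic N C"
  shows "gsum N (\<lambda>i j k. u i j k * ((A i j k - A (i - 1) j k) / h + (B i j k - B i (j - 1) k) / h
                                       + (C i j k - C i j (k - 1)) / h)) =
    - gsum N (\<lambda>i j k. Dx h u i j k * A i j k + Dy h u i j k * B i j k + Dz h u i j k * C i j k)"
proof -
  have "gsum N (\<lambda>i j k. u i j k * ((A i j k - A (i - 1) j k) / h + (B i j k - B i (j - 1) k) / h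
                                       + (C i j k - C i j (k - 1)) / h)) =
    gsum N (\<lambda>i j k. u i j k * ((A i j k - A (i - 1) j k) / h)) +
    gsum N (\<lambda>i j k. u i j k * ((B i j k - B i (j - 1) k) / h)) +
    gsum N (\<lambda>i j k. u i j k * ((C i j k - C i j (k - 1)) / h))"
    by (simp only: distrib_left gsum_add)
  also have "\<dots> = - gsum N (\<lambda>i j k. Dx h u i j k * A i j k) - gsum N (\<lambda>i j k. Dy h u i j k * B i j k)
     - gsum N (\<lambda>i j k. Dz h u i j k * C i j k)"
    using sbp_x[where N=N and u=u and A=A and h=h] sbp_y[where N=N and u=u and A=B and h=h]
      sbp_z[where N=N and u=u and A=C and h=h] u A B C
    by (simp add: per_x per_y per_z)
  also have "\<dots> = - gsum N (\<lambda>i j k. Dx h u i j k * A i j k + Dy h u i j k * B i j k + Dz h u i j k * C i j k)"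
    by (simp only: gsum_add)
  finally show ?thesis .
qed



lemma lap_split: "h \<noteq> 0 \<Longrightarrow> lap h f i j k =
   (Dx h f i j k - Dx h f (i - 1) j k) / h + (Dy h f i j k - Dy h f i (j - 1) k) / h + (Dz h f i j k - Dz h f i j (k - 1)) / h"
  unfolding lap_def Dx_def Dy_def Dz_def by (simp add: field_simps power2_eq_square)

lemma dissip:
  fixes f f' mu :: grid
  assumes h: "h > 0" and dt: "dt > 0" and th: "th \<ge> 0"
    and pf: "grid_periodic N f" and pf': "grid_periodic N f'" and pmu: "grid_periodic N mu"
    and bf: "\<And>i j k. \<bar>f i j k\<bar> < 1" and bf': "\<And>i j k. \<bar>f' i j k\<bar> < 1"
    and sch: "\<And>i j k. (f' i j k - f i j k) / dt = div_mob h M f mu i j k"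
    and mueq: "\<And>i j k. mu i j k = ln (1 + f' i j k) - ln (1 - f' i j k) - th * f i j k - eps\<^sup>2 * lap h f' i j k"
  shows "energy eps th h N f' + dt * mob_grad_sq h N M f mu \<le> energy eps th h N f"
proof -
  define d where "d i j k = f' i j k - f i j k" for i j k
  have pd: "grid_periodic N d" unfolding d_def[abs_def] by (rule per_diff[OF pf' pf])
  define Q where "Q i j k = Mx M f i j k * (Dx h mu i j k)\<^sup>2 + My M f i j k * (Dy h mu i j k)\<^sup>2 +
      Mz M f i j k * (Dz h mu i j k)\<^sup>2" for i j k
  have mob: "mob_grad_sq h N M f mu = h ^ 3 * gsum N Q"
    unfolding mob_grad_sq_def Q_def[abs_def] ..
  have dmu: "gsum N (\<lambda>i j k. d i j k * mu i j k) = - dt * gsum N Q"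
  proof -
    have "gsum N (\<lambda>i j k. d i j k * mu i j k) = dt * gsum N (\<lambda>i j k. mu i j k * div_mob h M f mu i j k)"
    proof -
      have "d i j k * mu i j k = dt * (mu i j k * div_mob h M f mu i j k)" for i j k
        using sch[of i j k] dt unfolding d_def by (simp add: field_simps)
      then have "gsum N (\<lambda>i j k. d i j k * mu i j k) = gsum N (\<lambda>i j k. dt * (mu i j k * div_mob h M f mu i j k))"
        by (rule gsum_cong)
      then show ?thesis by (simp only: gsum_cmult)
    qed
    also have "gsum N (\<lambda>i j k. mu i j k * div_mob h M f mu i j k) =
      - gsum N (\<lambda>i j k. Dx h mu i j k * (Mx M f i j k * Dx h mu i j k) + Dy h mu i j k * (My M f i j k * Dy h mu i j k)
                  + Dz h mu i j k * (Mz M f i j k * Dz h mu i j k))"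
      unfolding div_mob_def
      by (rule sbp_all[OF pmu per_mult[OF per_M(1)[OF pf] per_D(1)[OF pmu]]
              per_mult[OF per_M(2)[OF pf] per_D(2)[OF pmu]] per_mult[OF per_M(3)[OF pf] per_D(3)[OF pmu]]])
    also have "gsum N (\<lambda>i j k. Dx h mu i j k * (Mx M f i j k * Dx h mu i j k) + Dy h mu i j k * (My M f i j k * Dy h mu i j k)
                  + Dz h mu i j k * (Mz M f i j k * Dz h mu i j k)) = gsum N Q"
      unfolding Q_def by (rule gsum_cong) (simp add: power2_eq_square mult_ac)
    finally show ?thesis by simp
  qed
  have dlap: "gsum N (\<lambda>i j k. d i j k * lap h f' i j k) =
     - gsum N (\<lambda>i j k. Dx h d i j k * Dx h f' i j k + Dy h d i j k * Dy h f' i j k + Dz h d i j k * Dz h f' i j k)"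
  proof -
    have "h \<noteq> 0" using h by simp
    note lapeq = lap_split[OF this, of f']
    show ?thesis unfolding lapeq
      by (rule sbp_all[OF pd per_D(1)[OF pf'] per_D(2)[OF pf'] per_D(3)[OF pf']])
  qed
  define P where "P g i j k = Sx (g i j k) - th / 2 * (g i j k)\<^sup>2" for g :: grid and i j k
  have p1: "P f' i j k - P f i j k \<le> d i j k * (ln (1 + f' i j k) - ln (1 - f' i j k) - th * f i j k)" for i j k
  proof -
    have "Sx (f' i j k) - Sx (f i j k) \<le> (ln (1 + f' i j k) - ln (1 - f' i j k)) * d i j k"
      unfolding d_def by (rule Sx_convex[OF bf' bf])
    moreover have "- th / 2 * (f' i j k)\<^sup>2 + th / 2 * (f i j k)\<^sup>2 \<le> - th * f i j k * d i j k"
    proof -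
      have "0 \<le> th / 2 * (f' i j k - f i j k)\<^sup>2" using th by simp
      then show ?thesis unfolding d_def by (simp add: power2_eq_square algebra_simps)
    qed
    ultimately show ?thesis unfolding P_def by (simp add: algebra_simps)
  qed
  have p2: "grad2 h f' i j k - grad2 h f i j k \<le>
     2 * (Dx h d i j k * Dx h f' i j k + Dy h d i j k * Dy h f' i j k + Dz h d i j k * Dz h f' i j k)" for i j k
  proof -
    have e: "Dx h d i j k = Dx h f' i j k - Dx h f i j k" "Dy h d i j k = Dy h f' i j k - Dy h f i j k"
       "Dz h d i j k = Dz h f' i j k - Dz h f i j k"
      unfolding d_def Dx_def Dy_def Dz_def by (simp_all add: diff_divide_distrib)
    have "0 \<le> (Dx h f' i j k - Dx h f i j k)\<^sup>2 + (Dy h f' i j k - Dy h f i j k)\<^sup>2 + (Dz h f' i j k - Dz h f i j k)\<^sup>2"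
      by simp
    then show ?thesis unfolding e grad2_def by (simp add: power2_eq_square algebra_simps)
  qed
  define GD where "GD = gsum N (\<lambda>i j k. Dx h d i j k * Dx h f' i j k + Dy h d i j k * Dy h f' i j k + Dz h d i j k * Dz h f' i j k)"
  have s1: "gsum N (P f') - gsum N (P f) \<le> gsum N (\<lambda>i j k. d i j k * (ln (1 + f' i j k) - ln (1 - f' i j k) - th * f i j k))"
    unfolding gsum_diff[symmetric] by (rule gsum_mono) (rule p1)
  have s2: "gsum N (grad2 h f') - gsum N (grad2 h f) \<le> 2 * GD"
    unfolding gsum_diff[symmetric] GD_def gsum_cmult[symmetric] by (rule gsum_mono) (rule p2)
  have s3: "gsum N (\<lambda>i j k. d i j k * (ln (1 + f' i j k) - ln (1 - f' i j k) - th * f i j k)) + eps\<^sup>2 * GD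
      = gsum N (\<lambda>i j k. d i j k * mu i j k)"
  proof -
    have "gsum N (\<lambda>i j k. d i j k * mu i j k) =
      gsum N (\<lambda>i j k. d i j k * (ln (1 + f' i j k) - ln (1 - f' i j k) - th * f i j k) - eps\<^sup>2 * (d i j k * lap h f' i j k))"
      by (rule gsum_cong) (simp add: mueq algebra_simps)
    also have "\<dots> = gsum N (\<lambda>i j k. d i j k * (ln (1 + f' i j k) - ln (1 - f' i j k) - th * f i j k))
        - eps\<^sup>2 * gsum N (\<lambda>i j k. d i j k * lap h f' i j k)"
      by (simp only: gsum_diff gsum_cmult)
    finally show ?thesis unfolding dlap GD_def by simp
  qed
  have E1: "energy eps th h N f' = h ^ 3 * gsum N (P f') + eps\<^sup>2 / 2 * (h ^ 3 * gsum N (grad2 h f'))"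
    unfolding energy_repr P_def ..
  have E0: "energy eps th h N f = h ^ 3 * gsum N (P f) + eps\<^sup>2 / 2 * (h ^ 3 * gsum N (grad2 h f))"
    unfolding energy_repr P_def ..
  have h3: "h ^ 3 > 0" using h by simp
  have "energy eps th h N f' - energy eps th h N f =
     h ^ 3 * ((gsum N (P f') - gsum N (P f)) + eps\<^sup>2 / 2 * (gsum N (grad2 h f') - gsum N (grad2 h f)))"
    unfolding E1 E0 by (simp add: algebra_simps)
  also have "\<dots> \<le> h ^ 3 * (gsum N (\<lambda>i j k. d i j k * (ln (1 + f' i j k) - ln (1 - f' i j k) - th * f i j k)) + eps\<^sup>2 / 2 * (2 * GD))"
    using s1 s2 h3 by (intro mult_left_mono add_mono) (auto intro: mult_left_mono)
  also have "\<dots> = h ^ 3 * gsum N (\<lambda>i j k. d i j k * mu i j k)"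
    using s3 by simp
  also have "\<dots> = - dt * mob_grad_sq h N M f mu"
    unfolding dmu mob by simp
  finally show ?thesis by simp
qed



lemma ulnu: "\<bar>(u::real) * ln u\<bar> \<le> u\<^sup>2 + 1"
proof (cases "u = 0")
  case True then show ?thesis by simp
next
  case False
  define v where "v = \<bar>u\<bar>"
  have v: "v > 0" using False by (simp add: v_def)
  have lv: "ln u = ln v"
  proof (cases "u \<ge> 0")
    case True then show ?thesis by (simp add: v_def)
  next
    case False then have "v = - u" by (simp add: v_def)
    then show ?thesis using ln_minus[of u] by simp
  qed
  have a: "ln v \<le> v" using ln_le_minus_one[OF v] by simp
  have "ln (1 / v) \<le> 1 / v - 1" using v by (intro ln_le_minus_one) auto
  then have b: "- ln v \<le> 1 / v" using v by (simp add: ln_div)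
  have c: "0 < 1 / v" using v by simp
  have "\<bar>ln v\<bar> \<le> v + 1 / v" unfolding abs_le_iff using a b c v by linarith
  then have "v * \<bar>ln v\<bar> \<le> v * (v + 1 / v)" using v by (intro mult_left_mono) auto
  also have "\<dots> = u\<^sup>2 + 1" using v by (simp add: v_def field_simps power2_eq_square)
  finally show ?thesis by (simp add: lv abs_mult v_def)
qed

lemma gsum_const: "gsum N (\<lambda>i j k. c) = real N ^ 3 * c"
  by (simp add: gsum_def power3_eq_cube)

lemma mob_nonneg:
  assumes mob: "\<forall>x\<in>{-1..1}. M x \<ge> M0" and M0: "M0 > 0" and h: "h > 0"
    and bf: "\<And>i j k. \<bar>f i j k\<bar> < 1"
  shows "mob_grad_sq h N M f mu \<ge> 0"
proof -
  have avg: "M ((a + b) / 2) \<ge> 0" if "\<bar>a\<bar> < 1" "\<bar>b\<bar> < 1" for a b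
  proof -
    have "(a + b) / 2 \<in> {-1..1}" using that by auto
    then have "M0 \<le> M ((a + b) / 2)" using mob by blast
    then show ?thesis using M0 by linarith
  qed
  have "0 \<le> gsum N (\<lambda>i j k. Mx M f i j k * (Dx h mu i j k)\<^sup>2 + My M f i j k * (Dy h mu i j k)\<^sup>2 +
      Mz M f i j k * (Dz h mu i j k)\<^sup>2)"
  proof (rule gsum_nonneg)
    fix i j k
    have "Mx M f i j k \<ge> 0" "My M f i j k \<ge> 0" "Mz M f i j k \<ge> 0"
      unfolding Mx_def My_def Mz_def by (rule avg[OF bf bf])+
    then show "0 \<le> Mx M f i j k * (Dx h mu i j k)\<^sup>2 + My M f i j k * (Dy h mu i j k)\<^sup>2 +
      Mz M f i j k * (Dz h mu i j k)\<^sup>2" by simp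
  qed
  then show ?thesis unfolding mob_grad_sq_def using h by simp
qed

lemma grad_bound:
  assumes eps: "eps > 0" and th: "th \<ge> 0" and h: "h > 0" and hN: "h * real N = L"
    and bf: "\<And>i j k. \<bar>f i j k\<bar> < 1" and E: "energy eps th h N f \<le> C"
  shows "sqrt (grad_norm_sq h N f) \<le> sqrt (2 * C + th * L ^ 3) / eps"
proof -
  have h3: "h ^ 3 > 0" using h by simp
  have g: "grad_norm_sq h N f = h ^ 3 * gsum N (grad2 h f)"
    unfolding grad_norm_sq_def grad2_def[abs_def] ..
  have "gsum N (\<lambda>i j k. Sx (f i j k) - th / 2 * (f i j k)\<^sup>2) \<ge> gsum N (\<lambda>i j k. - th / 2 * 1)"
  proof (rule gsum_mono)
    fix i j k
    have "(f i j k)\<^sup>2 \<le> 1" using bf[of i j k] by (simp add: abs_square_le_1)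
    then have "th / 2 * (f i j k)\<^sup>2 \<le> th / 2 * 1" using th by (intro mult_left_mono) auto
    moreover have "Sx (f i j k) \<ge> 0" by (rule Sx_nonneg[OF bf])
    ultimately show "- th / 2 * 1 \<le> Sx (f i j k) - th / 2 * (f i j k)\<^sup>2" by simp
  qed
  then have "h ^ 3 * gsum N (\<lambda>i j k. Sx (f i j k) - th / 2 * (f i j k)\<^sup>2) \<ge> - th / 2 * L ^ 3"
  proof -
    have hN3: "h ^ 3 * real N ^ 3 = L ^ 3" using hN by (metis power_mult_distrib)
    assume a: "gsum N (\<lambda>i j k. - th / 2 * 1) \<le> gsum N (\<lambda>i j k. Sx (f i j k) - th / 2 * (f i j k)\<^sup>2)"
    have "h ^ 3 * (real N ^ 3 * (- th / 2 * 1)) \<le> h ^ 3 * gsum N (\<lambda>i j k. Sx (f i j k) - th / 2 * (f i j k)\<^sup>2)"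
      using a h3 unfolding gsum_const by (intro mult_left_mono) auto
    moreover have "h ^ 3 * (real N ^ 3 * (- th / 2 * 1)) = - th / 2 * L ^ 3"
      using hN3 by (simp add: algebra_simps)
    ultimately show ?thesis by linarith
  qed
  then have "eps\<^sup>2 / 2 * grad_norm_sq h N f \<le> C + th / 2 * L ^ 3"
    using E unfolding energy_repr g by simp
  then have "grad_norm_sq h N f \<le> (2 * C + th * L ^ 3) / eps\<^sup>2"
    using eps by (simp add: field_simps)
  then have "sqrt (grad_norm_sq h N f) \<le> sqrt ((2 * C + th * L ^ 3) / eps\<^sup>2)"
    by (rule real_sqrt_le_mono)
  also have "\<dots> = sqrt (2 * C + th * L ^ 3) / eps"
    using eps by (simp add: real_sqrt_divide)
  finally show ?thesis .
qed

lemma energy_upper: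
  assumes th: "th \<ge> 0" and h: "h > 0" and hN: "h * real N = L"
    and A: "\<And>i j k. \<bar>f i j k\<bar> \<le> A"
    and B: "\<And>i j k. \<bar>Dx h f i j k\<bar> \<le> B" "\<And>i j k. \<bar>Dy h f i j k\<bar> \<le> B" "\<And>i j k. \<bar>Dz h f i j k\<bar> \<le> B"
  shows "energy eps th h N f \<le> L ^ 3 * (2 * ((1 + A)\<^sup>2 + 1) + eps\<^sup>2 / 2 * (3 * B\<^sup>2))"
proof -
  have h3: "h ^ 3 \<ge> 0" using h by simp
  have hN3: "h ^ 3 * real N ^ 3 = L ^ 3" using hN by (metis power_mult_distrib)
  have p1: "Sx (f i j k) - th / 2 * (f i j k)\<^sup>2 \<le> 2 * ((1 + A)\<^sup>2 + 1)" for i j k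
  proof -
    let ?x = "f i j k"
    have "Sx ?x \<le> \<bar>(1 + ?x) * ln (1 + ?x)\<bar> + \<bar>(1 - ?x) * ln (1 - ?x)\<bar>" unfolding Sx_def by simp
    also have "\<dots> \<le> ((1 + ?x)\<^sup>2 + 1) + ((1 - ?x)\<^sup>2 + 1)" by (intro add_mono ulnu)
    also have "\<dots> \<le> ((1 + A)\<^sup>2 + 1) + ((1 + A)\<^sup>2 + 1)"
    proof -
      have a1: "\<bar>1 + ?x\<bar> \<le> 1 + A" "\<bar>1 - ?x\<bar> \<le> 1 + A" using A[of i j k] by auto
      have "\<bar>1 + ?x\<bar>\<^sup>2 \<le> (1 + A)\<^sup>2" by (rule power_mono[OF a1(1) abs_ge_zero])
      moreover have "\<bar>1 - ?x\<bar>\<^sup>2 \<le> (1 + A)\<^sup>2" by (rule power_mono[OF a1(2) abs_ge_zero])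
      ultimately
      have "(1 + ?x)\<^sup>2 \<le> (1 + A)\<^sup>2" "(1 - ?x)\<^sup>2 \<le> (1 + A)\<^sup>2" by simp_all
      then show ?thesis by simp
    qed
    finally have "Sx ?x \<le> 2 * ((1 + A)\<^sup>2 + 1)" by simp
    moreover have "th / 2 * ?x\<^sup>2 \<ge> 0" using th by simp
    ultimately show ?thesis by simp
  qed
  have p2: "grad2 h f i j k \<le> 3 * B\<^sup>2" for i j k
  proof -
    have "\<bar>Dx h f i j k\<bar>\<^sup>2 \<le> B\<^sup>2" by (rule power_mono[OF B(1) abs_ge_zero])
    moreover have "\<bar>Dy h f i j k\<bar>\<^sup>2 \<le> B\<^sup>2" by (rule power_mono[OF B(2) abs_ge_zero])
    moreover have "\<bar>Dz h f i j k\<bar>\<^sup>2 \<le> B\<^sup>2" by (rule power_mono[OF B(3) abs_ge_zero])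
    ultimately
    have "(Dx h f i j k)\<^sup>2 \<le> B\<^sup>2" "(Dy h f i j k)\<^sup>2 \<le> B\<^sup>2" "(Dz h f i j k)\<^sup>2 \<le> B\<^sup>2" by simp_all
    then show ?thesis unfolding grad2_def by simp
  qed
  have "gsum N (\<lambda>i j k. Sx (f i j k) - th / 2 * (f i j k)\<^sup>2) \<le> gsum N (\<lambda>i j k. 2 * ((1 + A)\<^sup>2 + 1))"
    by (rule gsum_mono) (rule p1)
  then have e1: "h ^ 3 * gsum N (\<lambda>i j k. Sx (f i j k) - th / 2 * (f i j k)\<^sup>2) \<le> L ^ 3 * (2 * ((1 + A)\<^sup>2 + 1))"
  proof -
    assume a: "gsum N (\<lambda>i j k. Sx (f i j k) - th / 2 * (f i j k)\<^sup>2) \<le> gsum N (\<lambda>i j k. 2 * ((1 + A)\<^sup>2 + 1))"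
    have "h ^ 3 * gsum N (\<lambda>i j k. Sx (f i j k) - th / 2 * (f i j k)\<^sup>2) \<le> h ^ 3 * (real N ^ 3 * (2 * ((1 + A)\<^sup>2 + 1)))"
      using mult_left_mono[OF a h3] unfolding gsum_const .
    then show ?thesis unfolding hN3[symmetric] by (simp add: mult.assoc)
  qed
  have "gsum N (grad2 h f) \<le> gsum N (\<lambda>i j k. 3 * B\<^sup>2)"
    by (rule gsum_mono) (rule p2)
  then have e2: "h ^ 3 * gsum N (grad2 h f) \<le> L ^ 3 * (3 * B\<^sup>2)"
  proof -
    assume a: "gsum N (grad2 h f) \<le> gsum N (\<lambda>i j k. 3 * B\<^sup>2)"
    have "h ^ 3 * gsum N (grad2 h f) \<le> h ^ 3 * (real N ^ 3 * (3 * B\<^sup>2))"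
      using mult_left_mono[OF a h3] unfolding gsum_const .
    then show ?thesis unfolding hN3[symmetric] by (simp add: mult.assoc)
  qed
  have "eps\<^sup>2 / 2 * (h ^ 3 * gsum N (grad2 h f)) \<le> eps\<^sup>2 / 2 * (L ^ 3 * (3 * B\<^sup>2))"
    using e2 by (intro mult_left_mono) auto
  then show ?thesis unfolding energy_repr using e1 by (simp add: algebra_simps)
qed



lemma Dx_phi0_bound:
  assumes L: "L > 0" and h: "h > 0" and D: "D \<ge> 0" "\<forall>k. norm (fourier_coeff L Phi k) \<le> D / mmk k ^ 6"
  shows "\<bar>Dx h (eval_grid h (fourier_proj L K Phi)) i j k\<bar> \<le> 2 * pi / L * D * Sb ^ 3"
    "\<bar>Dy h (eval_grid h (fourier_proj L K Phi)) i j k\<bar> \<le> 2 * pi / L * D * Sb ^ 3"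
    "\<bar>Dz h (eval_grid h (fourier_proj L K Phi)) i j k\<bar> \<le> 2 * pi / L * D * Sb ^ 3"
proof -
  let ?f = "fourier_proj L K Phi"
  define x where "x = (of_int i - 1/2) * h"
  define y where "y = (of_int j - 1/2) * h"
  define z where "z = (of_int k - 1/2) * h"
  have sh: "(of_int (a + 1) - 1/2) * h = (of_int a - 1/2) * h + h" for a :: int
    by (simp add: algebra_simps)
  have l1: "\<bar>?f (x + h, y + 0, z + 0) - ?f (x, y, z)\<bar> \<le> (\<bar>h\<bar> + \<bar>0\<bar> + \<bar>0\<bar>) * (2 * pi / L) * D * Sb ^ 3"
    by (rule fp_lip[OF L D])
  have l2: "\<bar>?f (x + 0, y + h, z + 0) - ?f (x, y, z)\<bar> \<le> (\<bar>0\<bar> + \<bar>h\<bar> + \<bar>0\<bar>) * (2 * pi / L) * D * Sb ^ 3"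
    by (rule fp_lip[OF L D])
  have l3: "\<bar>?f (x + 0, y + 0, z + h) - ?f (x, y, z)\<bar> \<le> (\<bar>0\<bar> + \<bar>0\<bar> + \<bar>h\<bar>) * (2 * pi / L) * D * Sb ^ 3"
    by (rule fp_lip[OF L D])
  have "Dx h (eval_grid h ?f) i j k = (?f (x + h, y + 0, z + 0) - ?f (x, y, z)) / h"
    unfolding Dx_def eval_grid_def x_def y_def z_def sh by simp
  then show "\<bar>Dx h (eval_grid h ?f) i j k\<bar> \<le> 2 * pi / L * D * Sb ^ 3"
    using l1 h by (simp add: abs_divide pos_divide_le_eq mult_ac)
  have "Dy h (eval_grid h ?f) i j k = (?f (x + 0, y + h, z + 0) - ?f (x, y, z)) / h"
    unfolding Dy_def eval_grid_def x_def y_def z_def sh by simp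
  then show "\<bar>Dy h (eval_grid h ?f) i j k\<bar> \<le> 2 * pi / L * D * Sb ^ 3"
    using l2 h by (simp add: abs_divide pos_divide_le_eq mult_ac)
  have "Dz h (eval_grid h ?f) i j k = (?f (x + 0, y + 0, z + h) - ?f (x, y, z)) / h"
    unfolding Dz_def eval_grid_def x_def y_def z_def sh by simp
  then show "\<bar>Dz h (eval_grid h ?f) i j k\<bar> \<le> 2 * pi / L * D * Sb ^ 3"
    using l3 h by (simp add: abs_divide pos_divide_le_eq mult_ac)
qed

lemma core:
  fixes eps theta0 L M0 :: real and M :: "real \<Rightarrow> real" and Phi :: "pt3 \<Rightarrow> real"
  assumes eps_pos: "eps > 0" and theta_pos: "theta0 > 0" and L_pos: "L > 0"
    and M0_pos: "M0 > 0" and mob: "\<forall>x\<in>{-1..1}. M x \<ge> M0"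
    and cont: "continuous_on UNIV Phi"
    and D: "D \<ge> 0" "\<forall>k. norm (fourier_coeff L Phi k) \<le> D / mmk k ^ 6"
    and C6: "C6 = 1 + L ^ 3 * (2 * ((1 + D * Sb ^ 3)\<^sup>2 + 1) + eps\<^sup>2 / 2 * (3 * (2 * pi / L * D * Sb ^ 3)\<^sup>2))"
    and N: "N = 2 * K + 1" and h: "h = L / real N" and p0: "phi0 = eval_grid h (fourier_proj L K Phi)"
  shows "integral (Omega L) Phi = ip h N phi0 (\<lambda>i j k. 1) \<and>
      energy eps theta0 h N phi0 \<le> C6 \<and>
      (\<forall>dt > 0. \<forall>phi mu :: nat \<Rightarrow> grid.
         (phi 0 = phi0 \<and>
          (\<forall>m. grid_periodic N (phi m) \<and> grid_periodic N (mu m)) \<and>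
          (\<forall>m i j k. \<bar>phi m i j k\<bar> < 1) \<and>
          (\<forall>m i j k. (phi (Suc m) i j k - phi m i j k) / dt =
                       div_mob h M (phi m) (mu (Suc m)) i j k) \<and>
          (\<forall>m i j k. mu (Suc m) i j k =
                       ln (1 + phi (Suc m) i j k) - ln (1 - phi (Suc m) i j k)
                       - theta0 * phi m i j k - eps\<^sup>2 * lap h (phi (Suc m)) i j k))
         \<longrightarrow>
         (\<forall>m. energy eps theta0 h N (phi (Suc m)) +
                 dt * mob_grad_sq h N M (phi m) (mu (Suc m))
               \<le> energy eps theta0 h N (phi m)) \<and>
         (\<forall>m. energy eps theta0 h N (phi m) \<le> energy eps theta0 h N phi0) \<and>
         (\<forall>m. sqrt (grad_norm_sq h N (phi m)) \<le> sqrt (2 * C6 + theta0 * L ^ 3) / eps))"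
proof (intro conjI allI impI)
  have N0: "real N > 0" using N by simp
  have h0: "h > 0" using L_pos N0 unfolding h by simp
  have hN: "h * real N = L" using N0 unfolding h by simp
  show "integral (Omega L) Phi = ip h N phi0 (\<lambda>i j k. 1)"
    unfolding p0 by (rule mean_id[OF L_pos cont N h])
  have bA: "\<bar>phi0 i j k\<bar> \<le> D * Sb ^ 3" for i j k
    unfolding p0 eval_grid_def by (rule fp_bound[OF D])
  have "energy eps theta0 h N phi0 \<le> L ^ 3 * (2 * ((1 + D * Sb ^ 3)\<^sup>2 + 1) + eps\<^sup>2 / 2 * (3 * (2 * pi / L * D * Sb ^ 3)\<^sup>2))"
    using theta_pos h0 hN bA Dx_phi0_bound[OF L_pos h0 D, of K] unfolding p0[symmetric]
    by (intro energy_upper) auto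
  then show "energy eps theta0 h N phi0 \<le> C6" unfolding C6 by simp
  then have E0: "energy eps theta0 h N phi0 \<le> C6" .
  fix dt :: real and phi mu :: "nat \<Rightarrow> grid"
  assume dt: "dt > 0"
  assume H: "phi 0 = phi0 \<and>
          (\<forall>m. grid_periodic N (phi m) \<and> grid_periodic N (mu m)) \<and>
          (\<forall>m i j k. \<bar>phi m i j k\<bar> < 1) \<and>
          (\<forall>m i j k. (phi (Suc m) i j k - phi m i j k) / dt =
                       div_mob h M (phi m) (mu (Suc m)) i j k) \<and>
          (\<forall>m i j k. mu (Suc m) i j k =
                       ln (1 + phi (Suc m) i j k) - ln (1 - phi (Suc m) i j k)
                       - theta0 * phi m i j k - eps\<^sup>2 * lap h (phi (Suc m)) i j k)"
  have H0: "phi 0 = phi0" using H by blast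
  have Hp: "\<And>m. grid_periodic N (phi m)" "\<And>m. grid_periodic N (mu m)" using H by blast+
  have Hb: "\<And>m i j k. \<bar>phi m i j k\<bar> < 1" using H by blast
  have Hs: "\<And>m i j k. (phi (Suc m) i j k - phi m i j k) / dt = div_mob h M (phi m) (mu (Suc m)) i j k"
    using H by blast
  have Hm: "\<And>m i j k. mu (Suc m) i j k = ln (1 + phi (Suc m) i j k) - ln (1 - phi (Suc m) i j k)
                       - theta0 * phi m i j k - eps\<^sup>2 * lap h (phi (Suc m)) i j k"
    using H by blast
  have diss: "energy eps theta0 h N (phi (Suc m)) + dt * mob_grad_sq h N M (phi m) (mu (Suc m))
               \<le> energy eps theta0 h N (phi m)" for m
    using theta_pos by (intro dissip[OF h0 dt _ Hp(1) Hp(1) Hp(2) Hb Hb Hs Hm]) auto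
  then show "\<And>m. energy eps theta0 h N (phi (Suc m)) + dt * mob_grad_sq h N M (phi m) (mu (Suc m))
               \<le> energy eps theta0 h N (phi m)" .
  have mono: "energy eps theta0 h N (phi m) \<le> energy eps theta0 h N phi0" for m
  proof (induction m)
    case 0 then show ?case using H0 by simp
  next
    case (Suc m)
    have "mob_grad_sq h N M (phi m) (mu (Suc m)) \<ge> 0"
      by (rule mob_nonneg[OF mob M0_pos h0 Hb])
    then have "dt * mob_grad_sq h N M (phi m) (mu (Suc m)) \<ge> 0" using dt by simp
    then show ?case using diss[of m] Suc by linarith
  qed
  then show "\<And>m. energy eps theta0 h N (phi m) \<le> energy eps theta0 h N phi0" .
  fix m
  show "sqrt (grad_norm_sq h N (phi m)) \<le> sqrt (2 * C6 + theta0 * L ^ 3) / eps"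
    using mono[of m] E0 theta_pos by (intro grad_bound[OF eps_pos _ h0 hN Hb]) auto
qed

theorem theorem4p1:
  fixes eps theta0 L M0 :: real
    and M :: "real \<Rightarrow> real"
    and Phi :: "pt3 \<Rightarrow> real"
  assumes eps_pos: "eps > 0" and theta_pos: "theta0 > 0" and L_pos: "L > 0"
    and M0_pos: "M0 > 0" and mob: "\<forall>x\<in>{-1..1}. M x \<ge> M0"
    and Phi_reg: "C6_per L Phi"
    and Phi_bd: "\<forall>x\<in>Omega L. \<bar>Phi x\<bar> < 1"
  shows "\<exists>C6 > 0. \<forall>K::nat.
    (let N = 2 * K + 1; h = L / real N; phi0 = eval_grid h (fourier_proj L K Phi) in
      integral (Omega L) Phi = ip h N phi0 (\<lambda>i j k. 1) \<and>
      energy eps theta0 h N phi0 \<le> C6 \<and>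
      (\<forall>dt > 0. \<forall>phi mu :: nat \<Rightarrow> grid.
         (phi 0 = phi0 \<and>
          (\<forall>m. grid_periodic N (phi m) \<and> grid_periodic N (mu m)) \<and>
          (\<forall>m i j k. \<bar>phi m i j k\<bar> < 1) \<and>
          (\<forall>m i j k. (phi (Suc m) i j k - phi m i j k) / dt =
                       div_mob h M (phi m) (mu (Suc m)) i j k) \<and>
          (\<forall>m i j k. mu (Suc m) i j k =
                       ln (1 + phi (Suc m) i j k) - ln (1 - phi (Suc m) i j k)
                       - theta0 * phi m i j k - eps\<^sup>2 * lap h (phi (Suc m)) i j k))
         \<longrightarrow>
         (\<forall>m. energy eps theta0 h N (phi (Suc m)) +
                 dt * mob_grad_sq h N M (phi m) (mu (Suc m))
               \<le> energy eps theta0 h N (phi m)) \<and>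
         (\<forall>m. energy eps theta0 h N (phi m) \<le> energy eps theta0 h N phi0) \<and>
         (\<forall>m. sqrt (grad_norm_sq h N (phi m)) \<le> sqrt (2 * C6 + theta0 * L ^ 3) / eps)))"
proof -
  have per: "periodic3 L Phi" and C: "Ck 6 Phi" using Phi_reg unfolding C6_per_def by auto
  have cont: "continuous_on UNIV Phi" by (rule Ck_cont[OF C])
  obtain D where D: "D \<ge> 0" "\<forall>k. norm (fourier_coeff L Phi k) \<le> D / mmk k ^ 6"
    using coeff_decay[OF L_pos C per] by blast
  define C6 where "C6 = 1 + L ^ 3 * (2 * ((1 + D * Sb ^ 3)\<^sup>2 + 1) + eps\<^sup>2 / 2 * (3 * (2 * pi / L * D * Sb ^ 3)\<^sup>2))"
  have Sb0: "Sb \<ge> 0"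
  proof -
    have "(\<Sum>n\<in>{-int 0..int 0}. gm n) \<le> Sb" by (rule sum1d)
    then show ?thesis by (simp add: gm_def)
  qed
  have "0 \<le> L ^ 3 * (2 * ((1 + D * Sb ^ 3)\<^sup>2 + 1) + eps\<^sup>2 / 2 * (3 * (2 * pi / L * D * Sb ^ 3)\<^sup>2))"
    using L_pos by (intro mult_nonneg_nonneg add_nonneg_nonneg) auto
  then have C6pos: "C6 > 0" unfolding C6_def by linarith
  show ?thesis
    unfolding Let_def
    by (intro exI[of _ C6] conjI C6pos allI core[OF eps_pos theta_pos L_pos M0_pos mob cont D C6_def refl refl refl])
qed


end
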